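(* Assume $p\ge2$, $h\le p$, $\sigma$ differentiable with $\sigma'$ $L$-Lipschitz and $|\sigma'(0)|\le L_0$, and $\mathbf x_1,\dots,\mathbf x_n$ i.i.d. $\mathcal N(0,I_p)$. Fix $0<R\le\|W^\star\|_F$. Let $B=o_{\max}(5Ls_{\max}\sqrt{h\log p}+L_0\sqrt h)$, $P=5\,o_{\max}L\sqrt{\log p}$, $q=\max\{1,8n^{-1}p\log p\}$. With probability at least $1-4(ne^{-p/2}+2np^{-10}+e^{-qn/(4p)})$: $H_1\preceq6qB^2I_{hp}$; and for a fixed $U$ (independent of the data) with $\|U-W^\star\|_F\le R$, $\|H_2\|\le6RqBP$ and $\|H_3\|\le12RqBP$.
   Context: $W^\star\in\mathbb R^{h\times p}$, $\mathbf o\in\mathbb R^h$, $o_{\max}=\max|\mathbf o_i|$, $s_{\max}$ the largest singular value of $W^\star$. For $W,U\in\mathbb R^{h\times p}$ with rows $W_i,U_i$ and $\mathbf g\in\mathbb R^p$: $\mathbf d(W;\mathbf g)_i=\mathbf o_i\sigma'(W_i\mathbf g)$; $\mathbf d(W,U;\mathbf g)_i=\mathbf o_i\frac{\sigma(W_i\mathbf g)-\sigma(U_i\mathbf g)}{W_i\mathbf g-U_i\mathbf g}$ (equal to $\mathbf o_i\sigma'(U_i\mathbf g)$ when the denominator vanishes); $\rho(W;\mathbf g)=\mathbf d(W;\mathbf g)\otimes\mathbf g$, $\rho(W,U;\mathbf g)=\mathbf d(W,U;\mathbf g)\otimes\mathbf g\in\mathbb R^{hp}$, where $\mathbf d\otimes\mathbf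 g$ concatenates the blocks $\mathbf d_1\mathbf g,\dots,\mathbf d_h\mathbf g$. Define $H_1=\frac1n\sum_j\rho(W^\star;\mathbf x_j)\rho(W^\star;\mathbf x_j)^T$, $H_2=\frac1n\sum_j\rho(W^\star;\mathbf x_j)(\rho(U,W^\star;\mathbf x_j)-\rho(W^\star;\mathbf x_j))^T$, $H_3=\frac1n\sum_j(\rho(U;\mathbf x_j)-\rho(W^\star;\mathbf x_j))\rho(U,W^\star;\mathbf x_j)^T$. $\|\cdot\|$ is spectral norm. *)

theory Defs
  imports "HOL-Probability.Probability"
begin

text \<open>Matrices are functions nat => nat => real used with explicit index bounds;
  vectors are functions nat => real. Row i of an h x p matrix W is (\<lambda>l. W i l), l < p.\<close>

definition row_dot :: "nat \<Rightarrow> (nat \<Rightarrow> nat \<Rightarrow> real) \<Rightarrow> nat \<Rightarrow> (nat \<Rightarrow> real) \<Rightarrow> real" where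
  "row_dot p W i g = (\<Sum>l<p. W i l * g l)"

definition dvec1 :: "(real \<Rightarrow> real) \<Rightarrow> (nat \<Rightarrow> real) \<Rightarrow> nat \<Rightarrow> (nat \<Rightarrow> nat \<Rightarrow> real)
    \<Rightarrow> (nat \<Rightarrow> real) \<Rightarrow> nat \<Rightarrow> real" where
  "dvec1 \<sigma> ov p W g i = ov i * deriv \<sigma> (row_dot p W i g)"

definition dvec2 :: "(real \<Rightarrow> real) \<Rightarrow> (nat \<Rightarrow> real) \<Rightarrow> nat \<Rightarrow> (nat \<Rightarrow> nat \<Rightarrow> real)
    \<Rightarrow> (nat \<Rightarrow> nat \<Rightarrow> real) \<Rightarrow> (nat \<Rightarrow> real) \<Rightarrow> nat \<Rightarrow> real" where
  "dvec2 \<sigma> ov p W U g i =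
     (if row_dot p W i g = row_dot p U i g then ov i * deriv \<sigma> (row_dot p U i g)
      else ov i * (\<sigma> (row_dot p W i g) - \<sigma> (row_dot p U i g)) / (row_dot p W i g - row_dot p U i g))"

text \<open>Kronecker-type concatenation d \<otimes> g in R^{hp}: entry i*p + l is d_i * g_l
  (for i < h, l < p).\<close>
definition kron :: "nat \<Rightarrow> (nat \<Rightarrow> real) \<Rightarrow> (nat \<Rightarrow> real) \<Rightarrow> nat \<Rightarrow> real" where
  "kron p d g k = d (k div p) * g (k mod p)"

definition rho1 where "rho1 \<sigma> ov p W g = kron p (dvec1 \<sigma> ov p W g) g"
definition rho2 where "rho2 \<sigma> ov p W U g = kron p (dvec2 \<sigma> ov p W U g) g"

text \<open>Empirical matrices (indices a, b < h*p). Data: x j (j < n), each x j :: nat => real.\<close>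
definition H1 :: "(real \<Rightarrow> real) \<Rightarrow> (nat \<Rightarrow> real) \<Rightarrow> nat \<Rightarrow> nat \<Rightarrow> (nat \<Rightarrow> nat \<Rightarrow> real)
    \<Rightarrow> (nat \<Rightarrow> nat \<Rightarrow> real) \<Rightarrow> nat \<Rightarrow> nat \<Rightarrow> real" where
  "H1 \<sigma> ov p n Ws x a b = (1 / real n) * (\<Sum>j<n. rho1 \<sigma> ov p Ws (x j) a * rho1 \<sigma> ov p Ws (x j) b)"

definition H2 :: "(real \<Rightarrow> real) \<Rightarrow> (nat \<Rightarrow> real) \<Rightarrow> nat \<Rightarrow> nat \<Rightarrow> (nat \<Rightarrow> nat \<Rightarrow> real)
    \<Rightarrow> (nat \<Rightarrow> nat \<Rightarrow> real) \<Rightarrow> (nat \<Rightarrow> nat \<Rightarrow> real) \<Rightarrow> nat \<Rightarrow> nat \<Rightarrow> real" where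
  "H2 \<sigma> ov p n Ws U x a b = (1 / real n) * (\<Sum>j<n. rho1 \<sigma> ov p Ws (x j) a *
       (rho2 \<sigma> ov p U Ws (x j) b - rho1 \<sigma> ov p Ws (x j) b))"

definition H3 :: "(real \<Rightarrow> real) \<Rightarrow> (nat \<Rightarrow> real) \<Rightarrow> nat \<Rightarrow> nat \<Rightarrow> (nat \<Rightarrow> nat \<Rightarrow> real)
    \<Rightarrow> (nat \<Rightarrow> nat \<Rightarrow> real) \<Rightarrow> (nat \<Rightarrow> nat \<Rightarrow> real) \<Rightarrow> nat \<Rightarrow> nat \<Rightarrow> real" where
  "H3 \<sigma> ov p n Ws U x a b = (1 / real n) * (\<Sum>j<n. (rho1 \<sigma> ov p U (x j) a - rho1 \<sigma> ov p Ws (x j) a) *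
       rho2 \<sigma> ov p U Ws (x j) b)"

definition spec_norm :: "nat \<Rightarrow> nat \<Rightarrow> (nat \<Rightarrow> nat \<Rightarrow> real) \<Rightarrow> real" where
  "spec_norm m k A = Sup {sqrt (\<Sum>i<m. (\<Sum>l<k. A i l * v l)\<^sup>2) | v. (\<Sum>l<k. (v l)\<^sup>2) \<le> 1}"

definition smax :: "nat \<Rightarrow> nat \<Rightarrow> (nat \<Rightarrow> nat \<Rightarrow> real) \<Rightarrow> real" where
  "smax m k A = spec_norm m k A"

definition frob_norm :: "nat \<Rightarrow> nat \<Rightarrow> (nat \<Rightarrow> nat \<Rightarrow> real) \<Rightarrow> real" where
  "frob_norm m k A = sqrt (\<Sum>i<m. \<Sum>l<k. (A i l)\<^sup>2)"

definition loewner_le_scalar :: "nat \<Rightarrow> (nat \<Rightarrow> nat \<Rightarrow> real) \<Rightarrow> real \<Rightarrow> bool" where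
  "loewner_le_scalar N A c \<longleftrightarrow>
     (\<forall>v. (\<Sum>a<N. \<Sum>b<N. v a * A a b * v b) \<le> c * (\<Sum>a<N. (v a)\<^sup>2))"

definition gauss_vec :: "nat \<Rightarrow> (nat \<Rightarrow> real) measure" where
  "gauss_vec p = PiM {..<p} (\<lambda>_. density lborel std_normal_density)"

definition gauss_sample :: "nat \<Rightarrow> nat \<Rightarrow> (nat \<Rightarrow> nat \<Rightarrow> real) measure" where
  "gauss_sample n p = PiM {..<n} (\<lambda>_. gauss_vec p)"

end

theory Submission
  imports Defs
begin

abbreviation "N1 \<equiv> density lborel std_normal_density"

lemma prob_N1: "prob_space N1"
  by (rule prob_space_normal_density) simp

lemma prob_gauss_vec: "prob_space (gauss_vec p)"
  unfolding gauss_vec_def by (intro prob_space_PiM) (rule prob_N1)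

lemma prob_gauss_sample: "prob_space (gauss_sample n p)"
  unfolding gauss_sample_def by (intro prob_space_PiM prob_gauss_vec)

lemma psf_N1: "product_sigma_finite (\<lambda>_. N1)"
  unfolding product_sigma_finite_def using prob_N1 prob_space_imp_sigma_finite by blast

lemma psf_gv: "product_sigma_finite (\<lambda>_. gauss_vec p)"
  unfolding product_sigma_finite_def using prob_gauss_vec prob_space_imp_sigma_finite by blast

lemma nn_normal_density: "0 < s \<Longrightarrow> (\<integral>\<^sup>+ y. ennreal (normal_density m s y) \<partial>lborel) = 1"
proof -
  assume s: "0 < s"
  have "(\<integral>\<^sup>+ y. ennreal (normal_density m s y) \<partial>lborel) = ennreal (\<integral>y. normal_density m s y \<partial>lborel)"
    by (rule nn_integral_eq_integral) (auto simp: integrable_normal_density s)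
  then show ?thesis using integral_normal_density[of s m] s by simp
qed

lemma mgf1: "(\<integral>\<^sup>+ y. ennreal (std_normal_density y * exp (a * y)) \<partial>lborel) = ennreal (exp (a\<^sup>2 / 2))"
proof -
  have eq: "std_normal_density y * exp (a * y) = exp (a\<^sup>2 / 2) * normal_density a 1 y" for y
  proof -
    have "- y\<^sup>2 / 2 + a * y = a\<^sup>2 / 2 + (- (y - a)\<^sup>2 / 2)" by (simp add: power2_eq_square field_simps)
    then have "exp (- y\<^sup>2 / 2) * exp (a * y) = exp (a\<^sup>2 / 2) * exp (- (y - a)\<^sup>2 / 2)"
      by (metis exp_add)
    then show ?thesis unfolding normal_density_def by simp
  qed
  have "(\<integral>\<^sup>+ y. ennreal (std_normal_density y * exp (a * y)) \<partial>lborel)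
      = (\<integral>\<^sup>+ y. ennreal (exp (a\<^sup>2 / 2)) * ennreal (normal_density a 1 y) \<partial>lborel)"
    by (simp add: eq ennreal_mult)
  also have "\<dots> = ennreal (exp (a\<^sup>2 / 2)) * (\<integral>\<^sup>+ y. ennreal (normal_density a 1 y) \<partial>lborel)"
    by (rule nn_integral_cmult) simp
  also have "\<dots> = ennreal (exp (a\<^sup>2 / 2))" by (simp add: nn_normal_density)
  finally show ?thesis .
qed

lemma mgf_sq1: assumes c: "c < 1/2"
  shows "(\<integral>\<^sup>+ y. ennreal (std_normal_density y * exp (c * y\<^sup>2)) \<partial>lborel) = ennreal (1 / sqrt (1 - 2 * c))"
proof -
  define s where "s = 1 / sqrt (1 - 2 * c)"
  have pos: "0 < 1 - 2 * c" using c by simp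
  have s0: "0 < s" unfolding s_def using pos by simp
  have s2: "s\<^sup>2 = 1 / (1 - 2 * c)" unfolding s_def using pos by (simp add: power_divide)
  have eq: "std_normal_density y * exp (c * y\<^sup>2) = s * normal_density 0 s y" for y
  proof -
    have e1: "- y\<^sup>2 / 2 + c * y\<^sup>2 = - y\<^sup>2 / (2 * s\<^sup>2)" using pos by (simp add: s2 field_simps)
    have e2: "1 / sqrt (2 * pi) = s * (1 / sqrt (2 * pi * s\<^sup>2))"
      using s0 by (simp add: real_sqrt_mult)
    show ?thesis unfolding normal_density_def
      using e1 e2 by (simp add: exp_add[symmetric])
  qed
  have "(\<integral>\<^sup>+ y. ennreal (std_normal_density y * exp (c * y\<^sup>2)) \<partial>lborel)
      = (\<integral>\<^sup>+ y. ennreal s * ennreal (normal_density 0 s y) \<partial>lborel)"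
    using s0 by (simp add: eq ennreal_mult)
  also have "\<dots> = ennreal s * (\<integral>\<^sup>+ y. ennreal (normal_density 0 s y) \<partial>lborel)"
    by (rule nn_integral_cmult) simp
  also have "\<dots> = ennreal s" using s0 by (simp add: nn_normal_density)
  finally show ?thesis unfolding s_def .
qed


lemma nn_N1: "f \<in> borel_measurable borel \<Longrightarrow> (\<integral>\<^sup>+ t. f t \<partial>N1) = (\<integral>\<^sup>+ t. ennreal (std_normal_density t) * f t \<partial>lborel)"
  by (subst nn_integral_density) auto

lemma mgf_vec:
  "(\<integral>\<^sup>+ x. ennreal (exp (b * (\<Sum>l<p. w l * x l))) \<partial>gauss_vec p) = ennreal (exp (b\<^sup>2 * (\<Sum>l<p. (w l)\<^sup>2) / 2))"
proof -
  interpret product_sigma_finite "\<lambda>_. N1" by (rule psf_N1)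
  have "(\<integral>\<^sup>+ x. ennreal (exp (b * (\<Sum>l<p. w l * x l))) \<partial>gauss_vec p)
     = (\<integral>\<^sup>+ x. (\<Prod>l<p. ennreal (exp (b * w l * x l))) \<partial>gauss_vec p)"
    by (simp add: sum_distrib_left exp_sum prod_ennreal mult.assoc)
  also have "\<dots> = (\<Prod>l<p. (\<integral>\<^sup>+ t. ennreal (exp (b * w l * t)) \<partial>N1))"
    unfolding gauss_vec_def by (rule product_nn_integral_prod) auto
  also have "\<dots> = (\<Prod>l<p. ennreal (exp ((b * w l)\<^sup>2 / 2)))"
    by (intro prod.cong refl) (simp add: nn_N1 ennreal_mult[symmetric] mgf1)
  also have "\<dots> = ennreal (exp (b\<^sup>2 * (\<Sum>l<p. (w l)\<^sup>2) / 2))"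
    by (simp add: prod_ennreal exp_sum[symmetric] sum_divide_distrib sum_distrib_left power_mult_distrib)
  finally show ?thesis .
qed


lemma meas_dot_gv[measurable]: "(\<lambda>x. \<Sum>l<p. w l * x l) \<in> borel_measurable (gauss_vec p)"
  unfolding gauss_vec_def by measurable

lemma meas_dot_gv'[measurable]: "(\<lambda>x. \<Sum>l<p. x l * w l) \<in> borel_measurable (gauss_vec p)"
  unfolding gauss_vec_def by measurable

lemma mgf_sq_vec:
  assumes mu: "0 \<le> \<mu>" and lt: "2 * \<mu> * (\<Sum>l<p. (w l)\<^sup>2) < 1"
  shows "(\<integral>\<^sup>+ x. ennreal (exp (\<mu> * (\<Sum>l<p. w l * x l)\<^sup>2)) \<partial>gauss_vec p)
        = ennreal (1 / sqrt (1 - 2 * (\<mu> * (\<Sum>l<p. (w l)\<^sup>2))))"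
proof -
  define a where "a = sqrt (2 * \<mu>)"
  have a2: "a\<^sup>2 = 2 * \<mu>" unfolding a_def using mu by simp
  let ?Z = "\<lambda>x. \<Sum>l<p. w l * x l"
  let ?W = "\<Sum>l<p. (w l)\<^sup>2"
  interpret gv: prob_space "gauss_vec p" by (rule prob_gauss_vec)
  interpret ps: pair_sigma_finite "gauss_vec p" lborel
    by (simp add: pair_sigma_finite.intro gv.sigma_finite_measure_axioms lborel.sigma_finite_measure_axioms)
  have "(\<integral>\<^sup>+ x. ennreal (exp (\<mu> * (?Z x)\<^sup>2)) \<partial>gauss_vec p)
      = (\<integral>\<^sup>+ x. (\<integral>\<^sup>+ g. ennreal (std_normal_density g * exp ((a * ?Z x) * g)) \<partial>lborel) \<partial>gauss_vec p)"
    by (intro nn_integral_cong) (simp add: mgf1 power_mult_distrib a2)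
  also have "\<dots> = (\<integral>\<^sup>+ g. (\<integral>\<^sup>+ x. ennreal (std_normal_density g * exp ((a * ?Z x) * g)) \<partial>gauss_vec p) \<partial>lborel)"
    by (rule ps.Fubini'[symmetric]) measurable
  also have "\<dots> = (\<integral>\<^sup>+ g. ennreal (std_normal_density g) * (\<integral>\<^sup>+ x. ennreal (exp ((a * g) * ?Z x)) \<partial>gauss_vec p) \<partial>lborel)"
    by (intro nn_integral_cong, subst nn_integral_cmult[symmetric]) (auto simp: ennreal_mult mult_ac)
  also have "\<dots> = (\<integral>\<^sup>+ g. ennreal (std_normal_density g * exp ((\<mu> * ?W) * g\<^sup>2)) \<partial>lborel)"
  proof (intro nn_integral_cong)
    fix g
    have "(\<integral>\<^sup>+ x. ennreal (exp ((a * g) * ?Z x)) \<partial>gauss_vec p) = ennreal (exp ((a * g)\<^sup>2 * ?W / 2))"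
      by (rule mgf_vec)
    also have "(a * g)\<^sup>2 * ?W / 2 = (\<mu> * ?W) * g\<^sup>2" by (simp add: power_mult_distrib a2)
    finally show "ennreal (std_normal_density g) * (\<integral>\<^sup>+ x. ennreal (exp ((a * g) * ?Z x)) \<partial>gauss_vec p) = ennreal (std_normal_density g * exp ((\<mu> * ?W) * g\<^sup>2))"
      by (simp add: ennreal_mult)
  qed
  also have "\<dots> = ennreal (1 / sqrt (1 - 2 * (\<mu> * ?W)))"
    by (rule mgf_sq1) (use lt in simp)
  finally show ?thesis .
qed


lemma meas_comp_gs[measurable]: "(\<lambda>x. x j l) \<in> borel_measurable (gauss_sample n p)"
proof (cases "j < n \<and> l < p")
  case True
  have 1: "(\<lambda>x. x j) \<in> measurable (gauss_sample n p) (gauss_vec p)"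
    unfolding gauss_sample_def using True by (intro measurable_component_singleton) auto
  have 2: "(\<lambda>y. y l) \<in> borel_measurable (gauss_vec p)"
  proof -
    have "(\<lambda>y. y l) \<in> measurable (PiM {..<p} (\<lambda>_. N1)) N1"
      using True by (intro measurable_component_singleton) auto
    also have "measurable (PiM {..<p} (\<lambda>_. N1)) N1 = borel_measurable (PiM {..<p} (\<lambda>_. N1))"
      by (rule measurable_cong_sets) auto
    finally show ?thesis unfolding gauss_vec_def .
  qed
  show ?thesis by (rule measurable_compose[OF 1 2])
next
  case False
  have "\<And>x. x \<in> space (gauss_sample n p) \<Longrightarrow> x j l = (if j < n then undefined else undefined l)"
    using False unfolding gauss_sample_def gauss_vec_def
    by (auto simp: space_PiM PiE_def extensional_def Pi_def)
  then show ?thesis by (rule measurable_cong[THEN iffD2, of _ _ "\<lambda>_. if j < n then undefined else undefined l"]) auto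
qed

lemma emeasure_le_exp:
  fixes f :: "'a \<Rightarrow> real"
  assumes [measurable]: "f \<in> borel_measurable M" and b: "0 \<le> b"
  shows "emeasure M {x\<in>space M. t < f x} \<le> (\<integral>\<^sup>+ x. ennreal (exp (b * (f x - t))) \<partial>M)"
proof -
  have "emeasure M {x\<in>space M. t < f x} = (\<integral>\<^sup>+ x. indicator {x\<in>space M. t < f x} x \<partial>M)"
    by (rule nn_integral_indicator[symmetric]) measurable
  also have "\<dots> \<le> (\<integral>\<^sup>+ x. ennreal (exp (b * (f x - t))) \<partial>M)"
  proof (rule nn_integral_mono)
    fix x assume "x \<in> space M"
    show "indicator {x\<in>space M. t < f x} x \<le> ennreal (exp (b * (f x - t)))"
    proof (cases "t < f x")
      case True
      then have "0 \<le> b * (f x - t)" using b by simp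
      then have "1 \<le> exp (b * (f x - t))" by simp
      then show ?thesis by (simp add: indicator_def)
    qed (simp add: indicator_def)
  qed
  finally show ?thesis .
qed

lemma gs_prod:
  assumes [measurable]: "G \<in> borel_measurable (gauss_vec p)"
  shows "(\<integral>\<^sup>+ x. (\<Prod>j<n. G (x j)) \<partial>gauss_sample n p) = (\<integral>\<^sup>+ y. G y \<partial>gauss_vec p) ^ n"
proof -
  interpret product_sigma_finite "\<lambda>_. gauss_vec p" by (rule psf_gv)
  show ?thesis unfolding gauss_sample_def
    by (subst product_nn_integral_prod) auto
qed

lemma gs_single:
  assumes [measurable]: "G \<in> borel_measurable (gauss_vec p)" and j: "j < n"
  shows "(\<integral>\<^sup>+ x. G (x j) \<partial>gauss_sample n p) = (\<integral>\<^sup>+ y. G y \<partial>gauss_vec p)"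
proof -
  interpret product_sigma_finite "\<lambda>_. gauss_vec p" by (rule psf_gv)
  interpret gv: prob_space "gauss_vec p" by (rule prob_gauss_vec)
  have "(\<integral>\<^sup>+ x. G (x j) \<partial>gauss_sample n p) = (\<integral>\<^sup>+ x. (\<Prod>k<n. (\<lambda>y. if k = j then G y else 1) (x k)) \<partial>gauss_sample n p)"
    using j by (intro nn_integral_cong) (simp add: prod.delta)
  also have "\<dots> = (\<Prod>k<n. (\<integral>\<^sup>+ y. (\<lambda>y. if k = j then G y else 1) y \<partial>gauss_vec p))"
    unfolding gauss_sample_def by (rule product_nn_integral_prod) auto
  also have "\<dots> = (\<integral>\<^sup>+ y. G y \<partial>gauss_vec p)"
  proof -
    have "\<And>k. (\<integral>\<^sup>+ y. (\<lambda>y. if k = j then G y else 1) y \<partial>gauss_vec p) = (if k = j then (\<integral>\<^sup>+ y. G y \<partial>gauss_vec p) else 1)"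
      by (simp add: gv.emeasure_space_1)
    then show ?thesis using j by (simp add: prod.delta)
  qed
  finally show ?thesis .
qed


lemma meas_dot_gs[measurable]: "(\<lambda>x. \<Sum>l<p. w l * x j l) \<in> borel_measurable (gauss_sample n p)"
  by measurable

lemma tail_lin:
  assumes j: "j < n" and W: "0 < (\<Sum>l<p. (w l)\<^sup>2)" and t: "0 \<le> t"
  shows "emeasure (gauss_sample n p) {x\<in>space (gauss_sample n p). t < (\<Sum>l<p. w l * x j l)}
         \<le> ennreal (exp (- t\<^sup>2 / (2 * (\<Sum>l<p. (w l)\<^sup>2))))"
proof -
  let ?W = "\<Sum>l<p. (w l)\<^sup>2"
  define b where "b = t / ?W"
  have b0: "0 \<le> b" unfolding b_def using W t by simp
  have "emeasure (gauss_sample n p) {x\<in>space (gauss_sample n p). t < (\<Sum>l<p. w l * x j l)}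
     \<le> (\<integral>\<^sup>+ x. ennreal (exp (b * ((\<Sum>l<p. w l * x j l) - t))) \<partial>gauss_sample n p)"
    by (rule emeasure_le_exp[OF _ b0]) measurable
  also have "\<dots> = (\<integral>\<^sup>+ x. ennreal (exp (- b * t)) * ennreal (exp (b * (\<Sum>l<p. w l * x j l))) \<partial>gauss_sample n p)"
    by (intro nn_integral_cong) (simp add: ennreal_mult[symmetric] exp_add[symmetric] algebra_simps)
  also have "\<dots> = ennreal (exp (- b * t)) * (\<integral>\<^sup>+ x. ennreal (exp (b * (\<Sum>l<p. w l * x j l))) \<partial>gauss_sample n p)"
    by (rule nn_integral_cmult) measurable
  also have "(\<integral>\<^sup>+ x. ennreal (exp (b * (\<Sum>l<p. w l * x j l))) \<partial>gauss_sample n p)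
      = (\<integral>\<^sup>+ y. ennreal (exp (b * (\<Sum>l<p. w l * y l))) \<partial>gauss_vec p)"
    by (rule gs_single[OF _ j]) measurable
  also have "\<dots> = ennreal (exp (b\<^sup>2 * ?W / 2))" by (rule mgf_vec)
  also have "ennreal (exp (- b * t)) * ennreal (exp (b\<^sup>2 * ?W / 2)) = ennreal (exp (- t\<^sup>2 / (2 * ?W)))"
  proof -
    have "- b * t + b\<^sup>2 * ?W / 2 = - t\<^sup>2 / (2 * ?W)"
      unfolding b_def using W by (simp add: field_simps power2_eq_square)
    then show ?thesis by (simp add: ennreal_mult[symmetric] exp_add[symmetric])
  qed
  finally show ?thesis .
qed

lemma tail_abs:
  assumes j: "j < n" and W: "0 < (\<Sum>l<p. (w l)\<^sup>2)" and t: "0 \<le> t"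
  shows "emeasure (gauss_sample n p) {x\<in>space (gauss_sample n p). t < \<bar>\<Sum>l<p. w l * x j l\<bar>}
         \<le> ennreal (2 * exp (- t\<^sup>2 / (2 * (\<Sum>l<p. (w l)\<^sup>2))))"
proof -
  let ?M = "gauss_sample n p"
  have W': "(\<Sum>l<p. (- w l)\<^sup>2) = (\<Sum>l<p. (w l)\<^sup>2)" by simp
  have neg: "(\<Sum>l<p. - w l * x j l) = - (\<Sum>l<p. w l * x j l)" for x by (simp add: sum_negf)
  have "{x\<in>space ?M. t < \<bar>\<Sum>l<p. w l * x j l\<bar>} = {x\<in>space ?M. t < (\<Sum>l<p. w l * x j l)} \<union> {x\<in>space ?M. t < (\<Sum>l<p. - w l * x j l)}"
    by (auto simp: sum_negf abs_if)
  then have "emeasure ?M {x\<in>space ?M. t < \<bar>\<Sum>l<p. w l * x j l\<bar>}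
      \<le> emeasure ?M {x\<in>space ?M. t < (\<Sum>l<p. w l * x j l)} + emeasure ?M {x\<in>space ?M. t < (\<Sum>l<p. - w l * x j l)}"
    by (simp add: emeasure_subadditive)
  also have "\<dots> \<le> ennreal (exp (- t\<^sup>2 / (2 * (\<Sum>l<p. (w l)\<^sup>2)))) + ennreal (exp (- t\<^sup>2 / (2 * (\<Sum>l<p. (w l)\<^sup>2))))"
  proof (intro add_mono tail_lin[OF j W t])
    show "emeasure ?M {x\<in>space ?M. t < (\<Sum>l<p. - w l * x j l)} \<le> ennreal (exp (- t\<^sup>2 / (2 * (\<Sum>l<p. (w l)\<^sup>2))))"
      using tail_lin[OF j, of "\<lambda>l. - w l" p t] W t by simp
  qed
  also have "\<dots> = ennreal (2 * exp (- t\<^sup>2 / (2 * (\<Sum>l<p. (w l)\<^sup>2))))"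
    by (simp add: ennreal_plus[symmetric] del: ennreal_plus)
  finally show ?thesis .
qed

lemma tail_sq:
  assumes mu: "0 \<le> \<mu>" and W: "2 * \<mu> * (\<Sum>l<p. (w l)\<^sup>2) \<le> 1/2"
  shows "emeasure (gauss_sample n p) {x\<in>space (gauss_sample n p). T < (\<Sum>j<n. (\<Sum>l<p. w l * x j l)\<^sup>2)}
         \<le> ennreal (sqrt 2 ^ n * exp (- \<mu> * T))"
proof -
  let ?W = "\<Sum>l<p. (w l)\<^sup>2"
  have "emeasure (gauss_sample n p) {x\<in>space (gauss_sample n p). T < (\<Sum>j<n. (\<Sum>l<p. w l * x j l)\<^sup>2)}
     \<le> (\<integral>\<^sup>+ x. ennreal (exp (\<mu> * ((\<Sum>j<n. (\<Sum>l<p. w l * x j l)\<^sup>2) - T))) \<partial>gauss_sample n p)"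
    by (rule emeasure_le_exp[OF _ mu]) measurable
  also have "\<dots> = (\<integral>\<^sup>+ x. ennreal (exp (- \<mu> * T)) * (\<Prod>j<n. (\<lambda>y. ennreal (exp (\<mu> * (\<Sum>l<p. w l * y l)\<^sup>2))) (x j)) \<partial>gauss_sample n p)"
  proof (intro nn_integral_cong)
    fix x
    have "exp (\<mu> * ((\<Sum>j<n. (\<Sum>l<p. w l * x j l)\<^sup>2) - T)) = exp (- \<mu> * T) * exp (\<Sum>j<n. \<mu> * (\<Sum>l<p. w l * x j l)\<^sup>2)"
      by (simp add: exp_add[symmetric] sum_distrib_left algebra_simps)
    also have "\<dots> = exp (- \<mu> * T) * (\<Prod>j<n. exp (\<mu> * (\<Sum>l<p. w l * x j l)\<^sup>2))"
      by (simp add: exp_sum)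
    finally show "ennreal (exp (\<mu> * ((\<Sum>j<n. (\<Sum>l<p. w l * x j l)\<^sup>2) - T))) = ennreal (exp (- \<mu> * T)) * (\<Prod>j<n. (\<lambda>y. ennreal (exp (\<mu> * (\<Sum>l<p. w l * y l)\<^sup>2))) (x j))"
      by (simp add: ennreal_mult prod_ennreal prod_nonneg)
  qed
  also have "\<dots> = ennreal (exp (- \<mu> * T)) * (\<integral>\<^sup>+ x. (\<Prod>j<n. (\<lambda>y. ennreal (exp (\<mu> * (\<Sum>l<p. w l * y l)\<^sup>2))) (x j)) \<partial>gauss_sample n p)"
    by (rule nn_integral_cmult) measurable
  also have "(\<integral>\<^sup>+ x. (\<Prod>j<n. (\<lambda>y. ennreal (exp (\<mu> * (\<Sum>l<p. w l * y l)\<^sup>2))) (x j)) \<partial>gauss_sample n p)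
     = (\<integral>\<^sup>+ y. ennreal (exp (\<mu> * (\<Sum>l<p. w l * y l)\<^sup>2)) \<partial>gauss_vec p) ^ n"
    by (rule gs_prod) measurable
  also have "\<dots> = ennreal (1 / sqrt (1 - 2 * (\<mu> * ?W))) ^ n"
    by (subst mgf_sq_vec[OF mu]) (use W in auto)
  also have "ennreal (exp (- \<mu> * T)) * ennreal (1 / sqrt (1 - 2 * (\<mu> * ?W))) ^ n \<le> ennreal (sqrt 2 ^ n * exp (- \<mu> * T))"
  proof -
    have h: "1 / 2 \<le> 1 - 2 * (\<mu> * ?W)" using W by simp
    have "1 / sqrt (1 - 2 * (\<mu> * ?W)) \<le> sqrt 2"
    proof -
      have "sqrt (1/2) \<le> sqrt (1 - 2 * (\<mu> * ?W))" using h by simp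
      moreover have "0 < sqrt (1/2::real)" by simp
      ultimately have "1 / sqrt (1 - 2 * (\<mu> * ?W)) \<le> 1 / sqrt (1/2)"
        by (intro divide_left_mono) auto
      also have "1 / sqrt (1/2::real) = sqrt 2" by (simp add: real_sqrt_divide)
      finally show ?thesis .
    qed
    then have "(1 / sqrt (1 - 2 * (\<mu> * ?W))) ^ n \<le> sqrt 2 ^ n"
      using h by (intro power_mono) auto
    then have "exp (- \<mu> * T) * (1 / sqrt (1 - 2 * (\<mu> * ?W))) ^ n \<le> sqrt 2 ^ n * exp (- \<mu> * T)"
      by (simp add: mult.commute mult_left_mono)
    moreover have "ennreal (exp (- \<mu> * T)) * ennreal (1 / sqrt (1 - 2 * (\<mu> * ?W))) ^ n
        = ennreal (exp (- \<mu> * T) * (1 / sqrt (1 - 2 * (\<mu> * ?W))) ^ n)"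
      using h by (simp add: ennreal_power ennreal_mult)
    ultimately show ?thesis by (simp add: ennreal_leI)
  qed
  finally show ?thesis .
qed


definition rho :: "nat \<Rightarrow> nat \<Rightarrow> (nat \<Rightarrow> nat \<Rightarrow> real) \<Rightarrow> (nat \<Rightarrow> real) \<Rightarrow> real" where
  "rho n p x V = L2_set (\<lambda>j. \<Sum>l<p. V l * x j l) {..<n}"

definition nrm :: "nat \<Rightarrow> (nat \<Rightarrow> real) \<Rightarrow> real" where
  "nrm p V = L2_set V {..<p}"

lemma abs_sum_le_L2: "\<bar>\<Sum>i\<in>A. f i * g i\<bar> \<le> L2_set f A * L2_set g A"
proof -
  have "\<bar>\<Sum>i\<in>A. f i * g i\<bar> \<le> (\<Sum>i\<in>A. \<bar>f i\<bar> * \<bar>g i\<bar>)"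
    by (rule order_trans[OF sum_abs]) (simp add: abs_mult)
  also have "\<dots> \<le> L2_set f A * L2_set g A" by (rule L2_set_mult_ineq)
  finally show ?thesis .
qed

lemma L2_set_abs: "L2_set (\<lambda>i. \<bar>f i\<bar>) A = L2_set f A"
  unfolding L2_set_def by simp

lemma rho_add: "rho n p x (\<lambda>l. V l + U l) \<le> rho n p x V + rho n p x U"
proof -
  have "rho n p x (\<lambda>l. V l + U l) = L2_set (\<lambda>j. (\<Sum>l<p. V l * x j l) + (\<Sum>l<p. U l * x j l)) {..<n}"
    unfolding rho_def by (simp add: sum.distrib distrib_right)
  also have "\<dots> \<le> rho n p x V + rho n p x U" unfolding rho_def by (rule L2_set_triangle_ineq)
  finally show ?thesis .
qed

lemma rho_scale: "rho n p x (\<lambda>l. c * V l) = \<bar>c\<bar> * rho n p x V"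
proof -
  have "rho n p x (\<lambda>l. c * V l) = L2_set (\<lambda>j. \<bar>c\<bar> * \<bar>\<Sum>l<p. V l * x j l\<bar>) {..<n}"
    unfolding rho_def
    by (subst L2_set_abs[symmetric]) (simp add: sum_distrib_left[symmetric] mult.assoc abs_mult)
  also have "\<dots> = \<bar>c\<bar> * rho n p x V"
    unfolding rho_def by (simp add: L2_set_right_distrib[symmetric] L2_set_abs)
  finally show ?thesis .
qed

lemma rho_bound: "rho n p x V \<le> nrm p V * L2_set (\<lambda>j. L2_set (x j) {..<p}) {..<n}"
proof -
  have "rho n p x V = L2_set (\<lambda>j. \<bar>\<Sum>l<p. V l * x j l\<bar>) {..<n}"
    unfolding rho_def by (simp add: L2_set_abs)
  also have "\<dots> \<le> L2_set (\<lambda>j. nrm p V * L2_set (x j) {..<p}) {..<n}"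
    by (intro L2_set_mono) (auto simp: nrm_def abs_sum_le_L2)
  also have "\<dots> = nrm p V * L2_set (\<lambda>j. L2_set (x j) {..<p}) {..<n}"
    by (simp add: L2_set_right_distrib nrm_def)
  finally show ?thesis .
qed

lemma rho_cong: "(\<And>l. l < p \<Longrightarrow> V l = U l) \<Longrightarrow> rho n p x V = rho n p x U"
  unfolding rho_def by (intro L2_set_cong refl sum.cong) auto

lemma nrm_cong: "(\<And>l. l < p \<Longrightarrow> V l = U l) \<Longrightarrow> nrm p V = nrm p U"
  unfolding nrm_def by (intro L2_set_cong) auto

definition grid :: "nat \<Rightarrow> real set" where
  "grid p = (\<lambda>k. real_of_int k / (20 * real p)) ` {-(20 * int p)..20 * int p}"

definition Net :: "nat \<Rightarrow> (nat \<Rightarrow> real) set" where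
  "Net p = {w \<in> PiE {..<p} (\<lambda>_. grid p). nrm p w \<le> 21/20}"

lemma finite_Net: "finite (Net p)"
proof -
  have "finite (PiE {..<p} (\<lambda>_. grid p))" by (intro finite_PiE) (auto simp: grid_def)
  then show ?thesis by (rule finite_subset[rotated]) (auto simp: Net_def)
qed

lemma card_Net: "card (Net p) \<le> (40 * p + 1) ^ p"
proof -
  have "card (Net p) \<le> card (PiE {..<p} (\<lambda>_. grid p))"
    unfolding Net_def by (intro card_mono) (auto simp: grid_def intro!: finite_PiE)
  also have "\<dots> = card (grid p) ^ p" by (simp add: card_PiE)
  also have "card (grid p) \<le> 40 * p + 1"
  proof -
    have "card (grid p) \<le> card {-(20 * int p)..20 * int p}" unfolding grid_def by (rule card_image_le) simp
    also have "\<dots> = 40 * p + 1" by simp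
    finally show ?thesis .
  qed
  then have "card (grid p) ^ p \<le> (40 * p + 1) ^ p" by (rule power_mono) simp
  finally show ?thesis .
qed

lemma round_net:
  assumes p: "0 < p" and V: "nrm p V \<le> 1"
  shows "\<exists>w\<in>Net p. nrm p (\<lambda>l. V l - w l) \<le> 1/20"
proof -
  define d where "d = 20 * real p"
  have d0: "0 < d" unfolding d_def using p by simp
  define w where "w = restrict (\<lambda>l. real_of_int \<lfloor>V l * d\<rfloor> / d) {..<p}"
  have absV: "\<bar>V l\<bar> \<le> 1" if "l < p" for l
  proof -
    have "\<bar>V l\<bar> \<le> L2_set (\<lambda>l. \<bar>V l\<bar>) {..<p}" by (rule member_le_L2_set) (use that in auto)
    then show ?thesis using V by (simp add: L2_set_abs nrm_def)
  qed
  have err: "\<bar>V l - w l\<bar> \<le> 1 / d" if "l < p" for l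
  proof -
    define f where "f = real_of_int \<lfloor>V l * d\<rfloor>"
    have f1: "f \<le> V l * d" "V l * d < f + 1" unfolding f_def by linarith+
    have "f / d \<le> V l" using f1(1) d0 by (simp add: divide_le_eq)
    moreover have "V l < f / d + 1 / d"
    proof -
      have "V l < (f + 1) / d" using f1(2) d0 by (simp add: less_divide_eq)
      then show ?thesis by (simp add: add_divide_distrib)
    qed
    moreover have "w l = f / d" using that unfolding w_def f_def by simp
    ultimately show ?thesis by (simp add: abs_le_iff)
  qed
  have "nrm p (\<lambda>l. V l - w l) = L2_set (\<lambda>l. \<bar>V l - w l\<bar>) {..<p}" by (simp add: nrm_def L2_set_abs)
  also have "\<dots> \<le> L2_set (\<lambda>l. 1 / d) {..<p}" by (intro L2_set_mono) (auto intro: err)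
  also have "\<dots> = sqrt (real p) / d" by (simp add: L2_set_constant d0 abs_of_pos)
  also have "\<dots> \<le> 1/20"
  proof -
    have "real p \<le> real p * real p" using p by simp
    then have "sqrt (real p) \<le> sqrt (real p * real p)" by (rule real_sqrt_le_mono)
    then have "sqrt (real p) \<le> real p" by simp
    then show ?thesis unfolding d_def using p by (simp add: field_simps)
  qed
  finally have e: "nrm p (\<lambda>l. V l - w l) \<le> 1/20" .
  have "w \<in> Net p"
  proof -
    have "w \<in> PiE {..<p} (\<lambda>_. grid p)"
    proof (unfold w_def, intro restrict_PiE_iff[THEN iffD2] ballI)
      fix l assume "l \<in> {..<p}"
      then have l: "\<bar>V l\<bar> \<le> 1" using absV by auto
      have "-1 \<le> V l" "V l \<le> 1" using l by linarith+
      then have "-1 * d \<le> V l * d" "V l * d \<le> 1 * d" using d0 by (intro mult_right_mono, simp_all)+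
      then have "- d \<le> V l * d" "V l * d \<le> d" by simp_all
      then have "- (20 * int p) \<le> \<lfloor>V l * d\<rfloor>" "\<lfloor>V l * d\<rfloor> \<le> 20 * int p"
        unfolding d_def by (simp_all add: le_floor_iff floor_le_iff)
      then show "real_of_int \<lfloor>V l * d\<rfloor> / d \<in> grid p" unfolding grid_def d_def by auto
    qed
    moreover have "nrm p w \<le> 21/20"
    proof -
      have "nrm p w = nrm p (\<lambda>l. V l + (- (V l - w l)))" by (simp add: nrm_def)
      also have "\<dots> \<le> nrm p V + nrm p (\<lambda>l. - (V l - w l))" unfolding nrm_def by (rule L2_set_triangle_ineq)
      also have "nrm p (\<lambda>l. - (V l - w l)) = nrm p (\<lambda>l. V l - w l)" unfolding nrm_def L2_set_def by (simp add: power2_commute)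
      finally show ?thesis using V e by simp
    qed
    ultimately show ?thesis unfolding Net_def by auto
  qed
  then show ?thesis using e by blast
qed


lemma net_bound:
  assumes p: "0 < p" and T: "0 \<le> T" and H: "\<forall>w\<in>Net p. rho n p x w \<le> T"
  shows "rho n p x V \<le> (20/19) * T * nrm p V"
proof -
  define C where "C = L2_set (\<lambda>j. L2_set (x j) {..<p}) {..<n}"
  define S where "S = rho n p x ` {V. nrm p V \<le> 1}"
  define K where "K = Sup S"
  have Sne: "S \<noteq> {}" unfolding S_def by (auto intro!: exI[of _ "\<lambda>_. 0"] simp: nrm_def L2_set_def)
  have Sbdd: "bdd_above S"
  proof (rule bdd_aboveI)
    fix y assume "y \<in> S"
    then obtain V where V: "nrm p V \<le> 1" "y = rho n p x V" unfolding S_def by auto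
    have "y \<le> nrm p V * C" unfolding V(2) C_def by (rule rho_bound)
    also have "\<dots> \<le> 1 * C" using V(1) by (intro mult_right_mono) (auto simp: C_def)
    finally show "y \<le> C" by simp
  qed
  have inS: "rho n p x V \<le> K" if "nrm p V \<le> 1" for V
    unfolding K_def using that by (intro cSup_upper Sbdd) (auto simp: S_def)
  have K0: "0 \<le> K" using inS[of "\<lambda>_. 0"] by (simp add: nrm_def L2_set_def rho_def)
  have a: "rho n p x U \<le> K * nrm p U" for U
  proof (cases "nrm p U = 0")
    case True
    then have "\<And>l. l < p \<Longrightarrow> U l = 0" unfolding nrm_def by (subst (asm) L2_set_eq_0_iff) auto
    then have "rho n p x U = rho n p x (\<lambda>_. 0)" by (intro rho_cong) auto
    then show ?thesis using True by (simp add: rho_def L2_set_def)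
  next
    case False
    then have pos: "0 < nrm p U" by (simp add: nrm_def order_less_le)
    have "nrm p (\<lambda>l. (1 / nrm p U) * U l) = (1 / nrm p U) * nrm p U"
      unfolding nrm_def using pos L2_set_right_distrib[of "1 / nrm p U" U "{..<p}"] by (simp add: nrm_def)
    then have "nrm p (\<lambda>l. (1 / nrm p U) * U l) \<le> 1" using pos by simp
    then have "rho n p x (\<lambda>l. (1 / nrm p U) * U l) \<le> K" by (rule inS)
    then have "(1 / nrm p U) * rho n p x U \<le> K" using pos rho_scale[of n p x "1 / nrm p U" U] by simp
    then show ?thesis using pos by (simp add: field_simps)
  qed
  have b: "rho n p x V \<le> T + K / 20" if V: "nrm p V \<le> 1" for V
  proof -
    obtain w where w: "w \<in> Net p" "nrm p (\<lambda>l. V l - w l) \<le> 1/20" using round_net[OF p V] by blast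
    have "rho n p x V = rho n p x (\<lambda>l. w l + (V l - w l))" by simp
    also have "\<dots> \<le> rho n p x w + rho n p x (\<lambda>l. V l - w l)" by (rule rho_add)
    also have "\<dots> \<le> T + K * (1/20)"
      using H w(1) a[of "\<lambda>l. V l - w l"] mult_left_mono[OF w(2) K0] by force
    finally show ?thesis by simp
  qed
  have "Sup S \<le> T + K / 20"
    by (rule cSup_least[OF Sne]) (auto simp: S_def intro: b)
  then have "K \<le> T + K / 20" unfolding K_def .
  then have "K \<le> (20/19) * T" by simp
  moreover have "0 \<le> nrm p V" by (simp add: nrm_def)
  ultimately have "K * nrm p V \<le> (20/19) * T * nrm p V" by (rule mult_right_mono)
  then show ?thesis using a[of V] by linarith
qed


lemma prob_bad3:
  "emeasure (gauss_sample n p) {x\<in>space (gauss_sample n p). \<exists>w\<in>Net p. T < (\<Sum>j<n. (\<Sum>l<p. w l * x j l)\<^sup>2)}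
   \<le> ennreal (real (card (Net p)) * (sqrt 2 ^ n * exp (- (100/441) * T)))"
proof -
  let ?M = "gauss_sample n p"
  let ?A = "\<lambda>w. {x\<in>space ?M. T < (\<Sum>j<n. (\<Sum>l<p. w l * x j l)\<^sup>2)}"
  have "{x\<in>space ?M. \<exists>w\<in>Net p. T < (\<Sum>j<n. (\<Sum>l<p. w l * x j l)\<^sup>2)} = (\<Union>w\<in>Net p. ?A w)" by auto
  then have "emeasure ?M {x\<in>space ?M. \<exists>w\<in>Net p. T < (\<Sum>j<n. (\<Sum>l<p. w l * x j l)\<^sup>2)} \<le> (\<Sum>w\<in>Net p. emeasure ?M (?A w))"
  proof -
    have "\<And>w. ?A w \<in> sets ?M" by measurable
    then have "emeasure ?M (\<Union>w\<in>Net p. ?A w) \<le> (\<Sum>w\<in>Net p. emeasure ?M (?A w))"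
      by (intro emeasure_subadditive_finite[OF finite_Net]) auto
    then show ?thesis using \<open>_ = (\<Union>w\<in>Net p. ?A w)\<close> by simp
  qed
  also have "\<dots> \<le> (\<Sum>w\<in>Net p. ennreal (sqrt 2 ^ n * exp (- (100/441) * T)))"
  proof (rule sum_mono)
    fix w assume "w \<in> Net p"
    then have "nrm p w \<le> 21/20" by (simp add: Net_def)
    then have "(nrm p w)\<^sup>2 \<le> (21/20)\<^sup>2" by (intro power_mono) (auto simp: nrm_def)
    then have "(\<Sum>l<p. (w l)\<^sup>2) \<le> (21/20)\<^sup>2" by (simp add: nrm_def L2_set_def sum_nonneg)
    then have "(\<Sum>l<p. (w l)\<^sup>2) \<le> 441/400" by (simp add: power2_eq_square)
    then have "2 * (100/441) * (\<Sum>l<p. (w l)\<^sup>2) \<le> 1/2" by simp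
    then show "emeasure ?M (?A w) \<le> ennreal (sqrt 2 ^ n * exp (- (100/441) * T))"
      by (intro tail_sq) auto
  qed
  also have "\<dots> = ennreal (real (card (Net p)) * (sqrt 2 ^ n * exp (- (100/441) * T)))"
    by (simp add: ennreal_of_nat_eq_real_of_nat ennreal_mult)
  finally show ?thesis .
qed

lemma numeric3:
  fixes p n :: nat and q :: real
  assumes p: "3 \<le> p" and n: "1 \<le> n" and q: "1 \<le> q" and qn: "8 * real p * ln (real p) \<le> q * real n"
  shows "real (40 * p + 1) ^ p * (sqrt 2 ^ n * exp (- (361/294) * (q * real n))) \<le> exp (- q * real n / (4 * real p))"
proof -
  have pp: "0 < real p" using p by simp
  have "real (40 * p + 1) \<le> real p ^ 5"
  proof -
    have "81 \<le> real p ^ 4" using power_mono[of 3 "real p" 4] p by simp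
    then have "81 * real p \<le> real p ^ 4 * real p" using pp by simp
    moreover have "real p ^ 4 * real p = real p ^ 5" by (simp add: eval_nat_numeral)
    ultimately show ?thesis using p by simp
  qed
  then have "real (40 * p + 1) ^ p \<le> (real p ^ 5) ^ p" by (intro power_mono) auto
  also have "\<dots> = exp (5 * real p * ln (real p))"
  proof -
    have "exp (5 * real p * ln (real p)) = exp (real (p * 5) * ln (real p))" by (simp add: mult_ac)
    also have "\<dots> = exp (ln (real p)) ^ (p * 5)" by (rule exp_of_nat_mult)
    also have "\<dots> = (real p ^ 5) ^ p" using pp by (simp add: power_mult[symmetric] mult.commute)
    finally show ?thesis by simp
  qed
  finally have A: "real (40 * p + 1) ^ p \<le> exp (5 * real p * ln (real p))" .
  have B: "sqrt 2 ^ n = exp (real n * (ln 2 / 2))"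
  proof -
    have "sqrt 2 = exp (ln 2 / 2)"
      by (simp add: powr_half_sqrt[symmetric] powr_def)
    then show ?thesis using exp_of_nat_mult[of n "ln (2::real) / 2"] by simp
  qed
  have qn0: "0 \<le> q * real n" using q n by simp
  have C1: "5 * real p * ln (real p) \<le> 5/8 * (q * real n)" using qn by simp
  have C2: "real n * (ln 2 / 2) \<le> 1/2 * (q * real n)"
  proof -
    have "real n * (ln 2 / 2) \<le> real n * (1/2)" using ln_2_less_1 by (intro mult_left_mono) auto
    also have "\<dots> \<le> 1/2 * (q * real n)" using q n by simp
    finally show ?thesis .
  qed
  have C3: "q * real n / (4 * real p) \<le> q * real n / 12"
    using p qn0 by (intro divide_left_mono) auto
  have "real (40 * p + 1) ^ p * (sqrt 2 ^ n * exp (- (361/294) * (q * real n)))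
      \<le> exp (5 * real p * ln (real p)) * (exp (real n * (ln 2 / 2)) * exp (- (361/294) * (q * real n)))"
    unfolding B by (intro mult_right_mono A) auto
  also have "\<dots> = exp (5 * real p * ln (real p) + real n * (ln 2 / 2) - (361/294) * (q * real n))"
    by (simp add: exp_add[symmetric] exp_diff)
  also have "\<dots> \<le> exp (- q * real n / (4 * real p))"
    using C1 C2 C3 qn0 by simp
  finally show ?thesis .
qed


lemma sum_hp:
  fixes f :: "nat \<Rightarrow> 'a::comm_monoid_add"
  shows "(\<Sum>a<h*p. f a) = (\<Sum>i<h. \<Sum>l<p. f (i*p + l))"
proof (induction h)
  case 0 then show ?case by simp
next
  case (Suc h)
  have e: "{..<Suc h * p} = {..<h*p} \<union> {h*p..<h*p+p}" by auto
  have "(\<Sum>a<Suc h * p. f a) = (\<Sum>a\<in>{..<h*p} \<union> {h*p..<h*p+p}. f a)" by (simp only: e)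
  also have "\<dots> = (\<Sum>a<h*p. f a) + (\<Sum>a\<in>{h*p..<h*p+p}. f a)"
    by (rule sum.union_disjoint) auto
  also have "(\<Sum>a\<in>{h*p..<h*p+p}. f a) = (\<Sum>l<p. f (h*p + l))"
    using sum.shift_bounds_nat_ivl[of f 0 "h*p" p] by (simp add: lessThan_atLeast0 add.commute)
  finally show ?case using Suc by simp
qed

lemma CS_sq:
  fixes f g :: "'b \<Rightarrow> real"
  shows "(\<Sum>i\<in>A. f i * g i)\<^sup>2 \<le> (\<Sum>i\<in>A. (f i)\<^sup>2) * (\<Sum>i\<in>A. (g i)\<^sup>2)"
proof -
  have "\<bar>\<Sum>i\<in>A. f i * g i\<bar> \<le> L2_set f A * L2_set g A" by (rule abs_sum_le_L2)
  then have "\<bar>\<Sum>i\<in>A. f i * g i\<bar>\<^sup>2 \<le> (L2_set f A * L2_set g A)\<^sup>2" by (intro power_mono) auto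
  then show ?thesis by (simp add: power_mult_distrib L2_set_def sum_nonneg)
qed

lemma kron_dot:
  assumes p: "0 < p"
  shows "(\<Sum>a<h*p. kron p d g a * v a) = (\<Sum>i<h. d i * (\<Sum>l<p. v (i*p + l) * g l))"
proof -
  have "(\<Sum>a<h*p. kron p d g a * v a) = (\<Sum>i<h. \<Sum>l<p. kron p d g (i*p+l) * v (i*p+l))"
    using sum_hp[of "\<lambda>a. kron p d g a * v a" h p] by simp
  also have "\<dots> = (\<Sum>i<h. d i * (\<Sum>l<p. v (i*p + l) * g l))"
    using p by (intro sum.cong refl) (simp add: kron_def sum_distrib_left mult_ac)
  finally show ?thesis .
qed

lemma sq_hp:
  fixes v :: "nat \<Rightarrow> real"
  shows "(\<Sum>a<h*p. (v a)\<^sup>2) = (\<Sum>i<h. \<Sum>l<p. (v (i*p+l))\<^sup>2)"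
  using sum_hp[of "\<lambda>a. (v a)\<^sup>2" h p] by simp

definition covgood :: "nat \<Rightarrow> nat \<Rightarrow> (nat \<Rightarrow> nat \<Rightarrow> real) \<Rightarrow> real \<Rightarrow> bool" where
  "covgood n p x C \<longleftrightarrow> (\<forall>V. (\<Sum>j<n. (\<Sum>l<p. V l * x j l)\<^sup>2) \<le> C * (\<Sum>l<p. (V l)\<^sup>2))"

lemma core:
  assumes p: "0 < p" and cg: "covgood n p x C" and C: "0 \<le> C"
    and al: "\<And>j. j < n \<Longrightarrow> (\<Sum>i<h. (\<alpha> j i)\<^sup>2) \<le> A\<^sup>2"
  shows "(\<Sum>j<n. (\<Sum>a<h*p. kron p (\<alpha> j) (x j) a * v a)\<^sup>2) \<le> C * A\<^sup>2 * (\<Sum>a<h*p. (v a)\<^sup>2)"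
proof -
  define c where "c j i = (\<Sum>l<p. v (i*p + l) * x j l)" for j i
  have "(\<Sum>j<n. (\<Sum>a<h*p. kron p (\<alpha> j) (x j) a * v a)\<^sup>2) = (\<Sum>j<n. (\<Sum>i<h. \<alpha> j i * c j i)\<^sup>2)"
    by (simp add: kron_dot[OF p] c_def)
  also have "\<dots> \<le> (\<Sum>j<n. A\<^sup>2 * (\<Sum>i<h. (c j i)\<^sup>2))"
  proof (rule sum_mono)
    fix j assume "j \<in> {..<n}"
    then have "(\<Sum>i<h. (\<alpha> j i)\<^sup>2) \<le> A\<^sup>2" using al by auto
    then show "(\<Sum>i<h. \<alpha> j i * c j i)\<^sup>2 \<le> A\<^sup>2 * (\<Sum>i<h. (c j i)\<^sup>2)"
      using CS_sq[of "\<alpha> j" "c j" "{..<h}"] by (meson mult_right_mono order_trans sum_nonneg zero_le_power2)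
  qed
  also have "\<dots> = A\<^sup>2 * (\<Sum>i<h. \<Sum>j<n. (c j i)\<^sup>2)"
    by (simp add: sum_distrib_left[symmetric] sum.swap[of _ "{..<n}"])
  also have "\<dots> \<le> A\<^sup>2 * (\<Sum>i<h. C * (\<Sum>l<p. (v (i*p+l))\<^sup>2))"
  proof (intro mult_left_mono sum_mono)
    fix i
    show "(\<Sum>j<n. (c j i)\<^sup>2) \<le> C * (\<Sum>l<p. (v (i*p+l))\<^sup>2)"
      using cg unfolding covgood_def c_def by (rule allE[of _ "\<lambda>l. v (i*p+l)"])
  qed simp
  also have "\<dots> = C * A\<^sup>2 * (\<Sum>a<h*p. (v a)\<^sup>2)"
    by (simp add: sq_hp sum_distrib_left[symmetric] mult_ac)
  finally show ?thesis .
qed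


lemma bilin:
  fixes f g :: "nat \<Rightarrow> nat \<Rightarrow> real"
  assumes n: "0 < n" and Kf: "0 \<le> Kf" and Kg: "0 \<le> Kg"
    and hf: "\<And>v. (\<Sum>j<n. (\<Sum>a<N. f j a * v a)\<^sup>2) \<le> Kf * (\<Sum>a<N. (v a)\<^sup>2)"
    and hg: "\<And>v. (\<Sum>j<n. (\<Sum>a<N. g j a * v a)\<^sup>2) \<le> Kg * (\<Sum>a<N. (v a)\<^sup>2)"
  shows "(\<Sum>a<N. (\<Sum>b<N. ((1 / real n) * (\<Sum>j<n. f j a * g j b)) * v b)\<^sup>2)
         \<le> (1 / real n)\<^sup>2 * Kf * Kg * (\<Sum>a<N. (v a)\<^sup>2)"
proof -
  define c where "c j = (\<Sum>b<N. g j b * v b)" for j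
  define y where "y a = (\<Sum>b<N. ((1 / real n) * (\<Sum>j<n. f j a * g j b)) * v b)" for a
  define e where "e j = (\<Sum>a<N. f j a * y a)" for j
  define Y2 where "Y2 = (\<Sum>a<N. (y a)\<^sup>2)"
  define V2 where "V2 = (\<Sum>a<N. (v a)\<^sup>2)"
  have Y20: "0 \<le> Y2" "0 \<le> V2" unfolding Y2_def V2_def by (auto intro: sum_nonneg)
  have ya: "y a = (1 / real n) * (\<Sum>j<n. f j a * c j)" for a
  proof -
    have "y a = (1 / real n) * (\<Sum>b<N. \<Sum>j<n. f j a * g j b * v b)"
      unfolding y_def by (simp add: sum_distrib_left sum_distrib_right mult.assoc)
    also have "(\<Sum>b<N. \<Sum>j<n. f j a * g j b * v b) = (\<Sum>j<n. \<Sum>b<N. f j a * g j b * v b)"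
      by (rule sum.swap)
    also have "\<dots> = (\<Sum>j<n. f j a * c j)"
      unfolding c_def by (simp add: sum_distrib_left mult.assoc)
    finally show ?thesis .
  qed
  have "Y2 = (\<Sum>a<N. y a * ((1 / real n) * (\<Sum>j<n. f j a * c j)))"
    unfolding Y2_def by (intro sum.cong refl) (metis power2_eq_square ya)
  also have "\<dots> = (1 / real n) * (\<Sum>j<n. c j * e j)"
  proof -
    have "(\<Sum>a<N. y a * ((1 / real n) * (\<Sum>j<n. f j a * c j))) = (1 / real n) * (\<Sum>a<N. \<Sum>j<n. c j * (f j a * y a))"
      by (simp add: sum_distrib_left sum_distrib_right mult_ac)
    also have "(\<Sum>a<N. \<Sum>j<n. c j * (f j a * y a)) = (\<Sum>j<n. \<Sum>a<N. c j * (f j a * y a))"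
      by (rule sum.swap)
    also have "\<dots> = (\<Sum>j<n. c j * e j)"
      unfolding e_def by (simp add: sum_distrib_left)
    finally show ?thesis .
  qed
  finally have Y2e: "Y2 = (1 / real n) * (\<Sum>j<n. c j * e j)" .
  have "(\<Sum>j<n. c j * e j)\<^sup>2 \<le> (\<Sum>j<n. (c j)\<^sup>2) * (\<Sum>j<n. (e j)\<^sup>2)" by (rule CS_sq)
  also have "\<dots> \<le> (Kg * V2) * (Kf * Y2)"
    using hg[of v] hf[of y] unfolding c_def e_def V2_def Y2_def
    by (intro mult_mono) (auto intro!: sum_nonneg mult_nonneg_nonneg Kg Kf)
  finally have "(\<Sum>j<n. c j * e j)\<^sup>2 \<le> (Kg * V2) * (Kf * Y2)" .
  then have "Y2\<^sup>2 \<le> (1 / real n)\<^sup>2 * ((Kg * V2) * (Kf * Y2))"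
    unfolding Y2e power_mult_distrib using n by (intro mult_left_mono) auto
  then have sq: "Y2 * Y2 \<le> ((1 / real n)\<^sup>2 * Kf * Kg * V2) * Y2" by (simp add: power2_eq_square mult_ac)
  have "Y2 \<le> (1 / real n)\<^sup>2 * Kf * Kg * V2"
  proof (cases "Y2 = 0")
    case True then show ?thesis using Kf Kg Y20 by simp
  next
    case False then have "0 < Y2" using Y20 by simp
    then show ?thesis using sq by simp
  qed
  then show ?thesis unfolding Y2_def V2_def y_def .
qed

lemma quadform:
  fixes f :: "nat \<Rightarrow> nat \<Rightarrow> real"
  shows "(\<Sum>a<N. \<Sum>b<N. v a * ((1 / real n) * (\<Sum>j<n. f j a * f j b)) * v b)
       = (1 / real n) * (\<Sum>j<n. (\<Sum>a<N. f j a * v a)\<^sup>2)"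
proof -
  have "(\<Sum>a<N. \<Sum>b<N. v a * ((1 / real n) * (\<Sum>j<n. f j a * f j b)) * v b)
      = (1 / real n) * (\<Sum>a<N. \<Sum>b<N. \<Sum>j<n. (f j a * v a) * (f j b * v b))"
    by (simp add: sum_distrib_left sum_distrib_right mult_ac)
  also have "(\<Sum>a<N. \<Sum>b<N. \<Sum>j<n. (f j a * v a) * (f j b * v b)) = (\<Sum>a<N. \<Sum>j<n. \<Sum>b<N. (f j a * v a) * (f j b * v b))"
    by (intro sum.cong refl sum.swap)
  also have "\<dots> = (\<Sum>j<n. \<Sum>a<N. \<Sum>b<N. (f j a * v a) * (f j b * v b))"
    by (rule sum.swap)
  also have "\<dots> = (\<Sum>j<n. (\<Sum>a<N. f j a * v a)\<^sup>2)"
    by (simp add: power2_eq_square sum_product)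
  finally show ?thesis .
qed


lemma sig_deriv:
  fixes \<sigma> :: "real \<Rightarrow> real" and x :: real
  assumes "\<sigma> differentiable_on UNIV"
  shows "DERIV \<sigma> x :> deriv \<sigma> x"
proof -
  have "\<sigma> differentiable at x" using assms unfolding differentiable_on_def by auto
  then show ?thesis by (simp add: DERIV_deriv_iff_real_differentiable)
qed

lemma deriv_bound:
  fixes \<sigma> :: "real \<Rightarrow> real"
  assumes lip: "\<forall>x y. \<bar>deriv \<sigma> x - deriv \<sigma> y\<bar> \<le> L * \<bar>x - y\<bar>" and d0: "\<bar>deriv \<sigma> 0\<bar> \<le> L0"
  shows "\<bar>deriv \<sigma> t\<bar> \<le> L0 + L * \<bar>t\<bar>"
  using lip[rule_format, of t 0] d0 by simp

lemma divdiff: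
  fixes \<sigma> :: "real \<Rightarrow> real" and a b :: real
  assumes dif: "\<sigma> differentiable_on UNIV"
    and lip: "\<forall>x y. \<bar>deriv \<sigma> x - deriv \<sigma> y\<bar> \<le> L * \<bar>x - y\<bar>"
    and ab: "a \<noteq> b"
  shows "\<bar>(\<sigma> a - \<sigma> b) / (a - b) - deriv \<sigma> b\<bar> \<le> L * \<bar>a - b\<bar>"
proof -
  have D: "\<And>x. DERIV \<sigma> x :> deriv \<sigma> x" by (rule sig_deriv[OF dif])
  obtain z where z: "min a b < z" "z < max a b" "\<sigma> (max a b) - \<sigma> (min a b) = (max a b - min a b) * deriv \<sigma> z"
  proof -
    have "min a b < max a b" using ab by (simp add: min_def max_def)
    then show ?thesis using MVT2[of "min a b" "max a b" \<sigma> "deriv \<sigma>"] D that by blast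
  qed
  have "(\<sigma> a - \<sigma> b) / (a - b) = deriv \<sigma> z"
  proof (cases "a < b")
    case True
    then have "\<sigma> b - \<sigma> a = (b - a) * deriv \<sigma> z" using z by (simp add: min_def max_def)
    then show ?thesis using True by (simp add: field_simps)
  next
    case False
    then have "b < a" using ab by simp
    then have "\<sigma> a - \<sigma> b = (a - b) * deriv \<sigma> z" using z by (simp add: min_def max_def)
    then show ?thesis using \<open>b < a\<close> by (simp add: field_simps)
  qed
  moreover have "\<bar>z - b\<bar> \<le> \<bar>a - b\<bar>"
  proof (cases "a < b")
    case True
    then have "a < z" "z < b" using z by (simp_all add: min_def max_def)
    then show ?thesis by simp
  next
    case False
    then have "b < z" "z < a" using z ab by (simp_all add: min_def max_def)
    then show ?thesis by simp
  qed
  moreover have "0 \<le> L" using lip[rule_format, of 1 0] abs_ge_zero[of "deriv \<sigma> 1 - deriv \<sigma> 0"] by simp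
  ultimately show ?thesis using lip[rule_format, of z b] mult_left_mono[of "\<bar>z - b\<bar>" "\<bar>a - b\<bar>" L] by linarith
qed


definition Fq :: "nat \<Rightarrow> nat \<Rightarrow> (nat \<Rightarrow> nat \<Rightarrow> real) \<Rightarrow> (nat \<Rightarrow> real) \<Rightarrow> real" where
  "Fq m k A v = (\<Sum>i<m. (\<Sum>l<k. A i l * v l)\<^sup>2)"

lemma Fq_scale: "Fq m k A (\<lambda>l. t * v l) = t\<^sup>2 * Fq m k A v"
proof -
  have e: "(\<Sum>l<k. A i l * (t * v l))\<^sup>2 = t\<^sup>2 * (\<Sum>l<k. A i l * v l)\<^sup>2" for i
  proof -
    have "(\<Sum>l<k. A i l * (t * v l)) = t * (\<Sum>l<k. A i l * v l)"
      by (simp add: sum_distrib_left mult_ac)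
    then show ?thesis by (simp add: power_mult_distrib)
  qed
  show ?thesis unfolding Fq_def by (simp only: e sum_distrib_left)
qed

lemma Fq_bound: "Fq m k A v \<le> (\<Sum>i<m. \<Sum>l<k. (A i l)\<^sup>2) * (\<Sum>l<k. (v l)\<^sup>2)"
proof -
  have "Fq m k A v \<le> (\<Sum>i<m. (\<Sum>l<k. (A i l)\<^sup>2) * (\<Sum>l<k. (v l)\<^sup>2))"
    unfolding Fq_def by (intro sum_mono CS_sq)
  then show ?thesis by (simp add: sum_distrib_right)
qed

lemma spec_set_eq: "{sqrt (\<Sum>i<m. (\<Sum>l<k. A i l * v l)\<^sup>2) | v. (\<Sum>l<k. (v l)\<^sup>2) \<le> 1}
   = (\<lambda>v. sqrt (Fq m k A v)) ` {v. (\<Sum>l<k. (v l)\<^sup>2) \<le> 1}"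
  unfolding Fq_def by auto

lemma spec_bdd: "bdd_above ((\<lambda>v. sqrt (Fq m k A v)) ` {v. (\<Sum>l<k. (v l)\<^sup>2) \<le> 1})"
proof (rule bdd_aboveI2)
  fix v :: "nat \<Rightarrow> real" assume "v \<in> {v. (\<Sum>l<k. (v l)\<^sup>2) \<le> 1}"
  then have v: "(\<Sum>l<k. (v l)\<^sup>2) \<le> 1" by simp
  have "Fq m k A v \<le> (\<Sum>i<m. \<Sum>l<k. (A i l)\<^sup>2) * 1"
    using Fq_bound[of m k A v] v by (meson mult_left_mono order_trans sum_nonneg zero_le_power2)
  then show "sqrt (Fq m k A v) \<le> sqrt (\<Sum>i<m. \<Sum>l<k. (A i l)\<^sup>2)" by simp
qed

lemma spec_upper:
  fixes v :: "nat \<Rightarrow> real"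
  shows "(\<Sum>l<k. (v l)\<^sup>2) \<le> 1 \<Longrightarrow> sqrt (Fq m k A v) \<le> spec_norm m k A"
  unfolding spec_norm_def spec_set_eq by (intro cSup_upper spec_bdd) auto

lemma spec_nonneg: "0 \<le> spec_norm m k A"
  using spec_upper[where v = "\<lambda>_. 0::real" and m = m and k = k and A = A] by (simp add: Fq_def)

lemma spec_le_iff:
  assumes c: "0 \<le> c"
  shows "spec_norm m k A \<le> c \<longleftrightarrow> (\<forall>v. Fq m k A v \<le> c\<^sup>2 * (\<Sum>l<k. (v l)\<^sup>2))"
proof
  assume S: "spec_norm m k A \<le> c"
  show "\<forall>v. Fq m k A v \<le> c\<^sup>2 * (\<Sum>l<k. (v l)\<^sup>2)"
  proof
    fix v
    define t where "t = sqrt (\<Sum>l<k. (v l)\<^sup>2)"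
    show "Fq m k A v \<le> c\<^sup>2 * (\<Sum>l<k. (v l)\<^sup>2)"
    proof (cases "t = 0")
      case True
      then have "\<And>l. l < k \<Longrightarrow> v l = 0" unfolding t_def by (simp add: sum_nonneg_eq_0_iff)
      then have "Fq m k A v = 0" unfolding Fq_def by simp
      then show ?thesis by (simp add: sum_nonneg)
    next
      case False
      then have t0: "0 < t" unfolding t_def by (simp add: sum_nonneg order_less_le)
      have t2: "t\<^sup>2 = (\<Sum>l<k. (v l)\<^sup>2)" unfolding t_def by (simp add: sum_nonneg)
      define u where "u l = (1 / t) * v l" for l
      have "(\<Sum>l<k. (u l)\<^sup>2) = (\<Sum>l<k. (v l)\<^sup>2) / t\<^sup>2" unfolding u_def by (simp add: power_divide sum_divide_distrib)
      then have "(\<Sum>l<k. (u l)\<^sup>2) \<le> 1" using t0 t2 by simp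
      then have "sqrt (Fq m k A u) \<le> c" using spec_upper S by (meson order_trans)
      then have "Fq m k A u \<le> c\<^sup>2" using c by (metis Fq_def real_sqrt_le_iff real_sqrt_pow2 sqrt_le_D sum_nonneg zero_le_power2)
      moreover have "Fq m k A v = t\<^sup>2 * Fq m k A u"
      proof -
        have "v = (\<lambda>l. t * u l)" unfolding u_def using t0 by auto
        then show ?thesis by (metis Fq_scale)
      qed
      ultimately show ?thesis unfolding t2[symmetric]
        by (metis mult.commute mult_left_mono zero_le_power2)
    qed
  qed
next
  assume H: "\<forall>v. Fq m k A v \<le> c\<^sup>2 * (\<Sum>l<k. (v l)\<^sup>2)"
  show "spec_norm m k A \<le> c"
    unfolding spec_norm_def spec_set_eq
  proof (rule cSup_least)
    show "(\<lambda>v. sqrt (Fq m k A v)) ` {v. (\<Sum>l<k. (v l)\<^sup>2) \<le> 1} \<noteq> {}" by (auto intro!: exI[of _ "\<lambda>_. 0"])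
  next
    fix y assume "y \<in> (\<lambda>v. sqrt (Fq m k A v)) ` {v. (\<Sum>l<k. (v l)\<^sup>2) \<le> 1}"
    then obtain v where v: "(\<Sum>l<k. (v l)\<^sup>2) \<le> 1" "y = sqrt (Fq m k A v)" by auto
    have "Fq m k A v \<le> c\<^sup>2 * 1" using H v(1) by (meson mult_left_mono order_trans zero_le_power2)
    then have "y \<le> sqrt (c\<^sup>2)" unfolding v(2) by (simp del: real_sqrt_abs)
    then show "y \<le> c" using c by simp
  qed
qed

lemma row_le_spec:
  assumes i: "i < m"
  shows "sqrt (\<Sum>l<k. (A i l)\<^sup>2) \<le> spec_norm m k A"
proof -
  define r where "r = sqrt (\<Sum>l<k. (A i l)\<^sup>2)"
  show ?thesis
  proof (cases "r = 0")
    case True then show ?thesis using spec_nonneg r_def by simp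
  next
    case False
    then have r0: "0 < r" unfolding r_def by (simp add: sum_nonneg order_less_le)
    have r2: "r\<^sup>2 = (\<Sum>l<k. (A i l)\<^sup>2)" unfolding r_def by (simp add: sum_nonneg)
    define u where "u l = A i l / r" for l
    have "(\<Sum>l<k. (u l)\<^sup>2) = (\<Sum>l<k. (A i l)\<^sup>2) / r\<^sup>2" unfolding u_def by (simp add: power_divide sum_divide_distrib)
    then have "(\<Sum>l<k. (u l)\<^sup>2) = r\<^sup>2 / r\<^sup>2" by (simp only: r2)
    then have u1: "(\<Sum>l<k. (u l)\<^sup>2) \<le> 1" using r0 by simp
    have "(\<Sum>l<k. A i l * u l) = r\<^sup>2 / r" unfolding u_def r2 by (simp add: power2_eq_square sum_divide_distrib)
    then have e: "(\<Sum>l<k. A i l * u l) = r" using r0 by (simp add: power2_eq_square)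
    have "(\<Sum>l<k. A i l * u l)\<^sup>2 \<le> Fq m k A u"
      unfolding Fq_def using i by (intro member_le_sum) auto
    then have "r\<^sup>2 \<le> Fq m k A u" using e by simp
    then have "r \<le> sqrt (Fq m k A u)" using r0 by (simp add: real_le_rsqrt)
    also have "\<dots> \<le> spec_norm m k A" by (rule spec_upper[OF u1])
    finally show ?thesis unfolding r_def .
  qed
qed


lemma frob_le: "frob_norm h p W \<le> sqrt (real h) * spec_norm h p W"
proof -
  have "(\<Sum>i<h. \<Sum>l<p. (W i l)\<^sup>2) \<le> (\<Sum>i<h. (spec_norm h p W)\<^sup>2)"
  proof (rule sum_mono)
    fix i assume "i \<in> {..<h}"
    then have "sqrt (\<Sum>l<p. (W i l)\<^sup>2) \<le> spec_norm h p W" by (intro row_le_spec) auto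
    then have "(sqrt (\<Sum>l<p. (W i l)\<^sup>2))\<^sup>2 \<le> (spec_norm h p W)\<^sup>2" by (intro power_mono) (auto intro: sum_nonneg)
    then show "(\<Sum>l<p. (W i l)\<^sup>2) \<le> (spec_norm h p W)\<^sup>2" by (simp add: sum_nonneg)
  qed
  then have "frob_norm h p W \<le> sqrt (real h * (spec_norm h p W)\<^sup>2)" unfolding frob_norm_def by simp
  then show ?thesis using spec_nonneg[of h p W] by (simp add: real_sqrt_mult)
qed

lemma kron_diff: "kron p d1 g b - kron p d2 g b = kron p (\<lambda>i. d1 i - d2 i) g b"
  unfolding kron_def by (simp add: algebra_simps)

lemma sum_sq_bound:
  fixes f :: "nat \<Rightarrow> real"
  assumes "\<And>i. i < h \<Longrightarrow> \<bar>f i\<bar> \<le> c * r i" "0 \<le> c" "(\<Sum>i<h. (r i)\<^sup>2) \<le> R\<^sup>2"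
  shows "(\<Sum>i<h. (f i)\<^sup>2) \<le> (c * R)\<^sup>2"
proof -
  have "(\<Sum>i<h. (f i)\<^sup>2) \<le> (\<Sum>i<h. c\<^sup>2 * (r i)\<^sup>2)"
  proof (rule sum_mono)
    fix i assume "i \<in> {..<h}"
    then have "\<bar>f i\<bar> \<le> c * r i" using assms(1) by auto
    then have "\<bar>f i\<bar>\<^sup>2 \<le> (c * r i)\<^sup>2" by (intro power_mono) auto
    then show "(f i)\<^sup>2 \<le> c\<^sup>2 * (r i)\<^sup>2" by (simp add: power_mult_distrib)
  qed
  also have "\<dots> \<le> c\<^sup>2 * R\<^sup>2" using assms(3) by (simp add: sum_distrib_left[symmetric] mult_left_mono)
  finally show ?thesis by (simp add: power_mult_distrib)
qed

lemma L2_tri_sq: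
  fixes f g :: "nat \<Rightarrow> real"
  assumes "(\<Sum>i<h. (f i)\<^sup>2) \<le> A\<^sup>2" "(\<Sum>i<h. (g i)\<^sup>2) \<le> B\<^sup>2" "0 \<le> A" "0 \<le> B"
  shows "(\<Sum>i<h. (f i + g i)\<^sup>2) \<le> (A + B)\<^sup>2"
proof -
  have a: "L2_set f {..<h} \<le> A" using real_sqrt_le_mono[OF assms(1)] assms(3) unfolding L2_set_def by simp
  have b: "L2_set g {..<h} \<le> B" using real_sqrt_le_mono[OF assms(2)] assms(4) unfolding L2_set_def by simp
  have "L2_set (\<lambda>i. f i + g i) {..<h} \<le> A + B" using L2_set_triangle_ineq[of f g "{..<h}"] a b by linarith
  then have "(L2_set (\<lambda>i. f i + g i) {..<h})\<^sup>2 \<le> (A + B)\<^sup>2" by (intro power_mono) auto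
  then show ?thesis unfolding L2_set_def by (simp add: sum_nonneg)
qed


lemma determ:
  fixes \<sigma> :: "real \<Rightarrow> real" and ov :: "nat \<Rightarrow> real"
    and Ws U :: "nat \<Rightarrow> nat \<Rightarrow> real" and x :: "nat \<Rightarrow> nat \<Rightarrow> real"
    and h p n :: nat and L L0 R q :: real
  assumes p: "0 < p" and n: "0 < n" and h: "0 < h"
    and dif: "\<sigma> differentiable_on UNIV"
    and lip: "\<forall>x y. \<bar>deriv \<sigma> x - deriv \<sigma> y\<bar> \<le> L * \<bar>x - y\<bar>"
    and d0: "\<bar>deriv \<sigma> 0\<bar> \<le> L0"
    and R: "0 < R" "R \<le> frob_norm h p Ws" "frob_norm h p (\<lambda>i l. U i l - Ws i l) \<le> R"
    and q: "1 \<le> q" and lnp: "0 \<le> ln (real p)"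
    and E1: "\<forall>i<h. \<forall>j<n. \<bar>row_dot p Ws i (x j)\<bar> \<le> 5 * sqrt (\<Sum>l<p. (Ws i l)\<^sup>2) * sqrt (ln (real p))"
    and E2: "\<forall>i<h. \<forall>j<n. \<bar>\<Sum>l<p. (U i l - Ws i l) * x j l\<bar> \<le> 5 * sqrt (\<Sum>l<p. (U i l - Ws i l)\<^sup>2) * sqrt (ln (real p))"
    and E3: "covgood n p x (6 * q * real n)"
    and omax_def: "omax = Max ((\<lambda>i. \<bar>ov i\<bar>) ` {..<h})"
    and B_def: "B = omax * (5 * L * smax h p Ws * sqrt (real h * ln (real p)) + L0 * sqrt (real h))"
    and P_def: "P = 5 * omax * L * sqrt (ln (real p))"
  shows "loewner_le_scalar (h * p) (H1 \<sigma> ov p n Ws x) (6 * q * B\<^sup>2)"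
    and "\<forall>v. Fq (h * p) (h * p) (H2 \<sigma> ov p n Ws U x) v \<le> (6 * R * q * B * P)\<^sup>2 * (\<Sum>a<h*p. (v a)\<^sup>2)"
    and "\<forall>v. Fq (h * p) (h * p) (H3 \<sigma> ov p n Ws U x) v \<le> (12 * R * q * B * P)\<^sup>2 * (\<Sum>a<h*p. (v a)\<^sup>2)"
proof -
  define C where "C = 6 * q * real n"
  have C0: "0 \<le> C" unfolding C_def using q by simp
  have omax: "\<And>i. i < h \<Longrightarrow> \<bar>ov i\<bar> \<le> omax" unfolding omax_def by (intro Max_ge) auto
  have omax0: "0 \<le> omax" using omax[of 0] h by linarith
  have L0': "0 \<le> L" using lip[rule_format, of 1 0] abs_ge_zero[of "deriv \<sigma> 1 - deriv \<sigma> 0"] by simp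
  have L00: "0 \<le> L0" using d0 by linarith
  define s where "s = smax h p Ws"
  have s0: "0 \<le> s" unfolding s_def smax_def by (rule spec_nonneg)
  have rows: "\<And>i. i < h \<Longrightarrow> sqrt (\<Sum>l<p. (Ws i l)\<^sup>2) \<le> s" unfolding s_def smax_def by (rule row_le_spec)
  define lam where "lam = sqrt (ln (real p))"
  have lam0: "0 \<le> lam" unfolding lam_def using lnp by simp
  define b where "b = omax * (L0 + L * (5 * s * lam))"
  have b0: "0 \<le> b" unfolding b_def using omax0 L00 L0' s0 lam0 by simp
  have B_eq: "B = sqrt (real h) * b" unfolding B_def b_def s_def lam_def using lnp
    by (simp add: real_sqrt_mult algebra_simps)
  have B0: "0 \<le> B" unfolding B_eq using b0 by simp
  define P' where "P' = omax * L * (5 * lam)"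
  have P_eq: "P = P'" unfolding P_def P'_def lam_def by simp
  have P0: "0 \<le> P" unfolding P_eq P'_def using omax0 L0' lam0 by simp
  define d1 where "d1 j i = dvec1 \<sigma> ov p Ws (x j) i" for j i
  have d1b: "(\<Sum>i<h. (d1 j i)\<^sup>2) \<le> B\<^sup>2" if j: "j < n" for j
  proof -
    have "(\<Sum>i<h. (d1 j i)\<^sup>2) \<le> (\<Sum>i<h. b\<^sup>2)"
    proof (rule sum_mono)
      fix i assume "i \<in> {..<h}"
      then have i: "i < h" by simp
      have t: "\<bar>row_dot p Ws i (x j)\<bar> \<le> 5 * s * lam"
      proof -
        have "\<bar>row_dot p Ws i (x j)\<bar> \<le> 5 * sqrt (\<Sum>l<p. (Ws i l)\<^sup>2) * lam"
          using E1 i j unfolding lam_def by auto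
        also have "\<dots> \<le> 5 * s * lam" using rows[OF i] lam0 by (simp add: mult_right_mono)
        finally show ?thesis .
      qed
      have "\<bar>deriv \<sigma> (row_dot p Ws i (x j))\<bar> \<le> L0 + L * (5 * s * lam)"
        using deriv_bound[OF lip d0, of "row_dot p Ws i (x j)"] mult_left_mono[OF t L0'] by linarith
      then have "\<bar>d1 j i\<bar> \<le> b" unfolding d1_def dvec1_def b_def abs_mult
        using omax[OF i] omax0 by (intro mult_mono) auto
      then have "\<bar>d1 j i\<bar>\<^sup>2 \<le> b\<^sup>2" by (intro power_mono) auto
      then show "(d1 j i)\<^sup>2 \<le> b\<^sup>2" by simp
    qed
    also have "\<dots> = B\<^sup>2" unfolding B_eq using h by (simp add: power_mult_distrib)
    finally show ?thesis .
  qed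
  define r where "r i = sqrt (\<Sum>l<p. (U i l - Ws i l)\<^sup>2)" for i
  have rR: "(\<Sum>i<h. (r i)\<^sup>2) \<le> R\<^sup>2"
  proof -
    have "(\<Sum>i<h. (r i)\<^sup>2) = (frob_norm h p (\<lambda>i l. U i l - Ws i l))\<^sup>2"
      unfolding r_def frob_norm_def by (simp add: sum_nonneg)
    also have "\<dots> \<le> R\<^sup>2" using R(3) by (intro power_mono) (auto simp: frob_norm_def intro!: sum_nonneg)
    finally show ?thesis .
  qed
  have Dj: "\<bar>row_dot p U i (x j) - row_dot p Ws i (x j)\<bar> \<le> 5 * lam * r i" if "i < h" "j < n" for i j
  proof -
    have "row_dot p U i (x j) - row_dot p Ws i (x j) = (\<Sum>l<p. (U i l - Ws i l) * x j l)"
      unfolding row_dot_def by (simp add: sum_subtractf left_diff_distrib)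
    then show ?thesis using E2 that unfolding r_def lam_def by (auto simp: mult_ac)
  qed
  define e where "e j i = dvec2 \<sigma> ov p U Ws (x j) i - dvec1 \<sigma> ov p Ws (x j) i" for j i
  have eb: "(\<Sum>i<h. (e j i)\<^sup>2) \<le> (R * P)\<^sup>2" if j: "j < n" for j
  proof -
    have "(\<Sum>i<h. (e j i)\<^sup>2) \<le> (P' * R)\<^sup>2"
    proof (rule sum_sq_bound[OF _ _ rR])
      fix i assume i: "i < h"
      let ?a = "row_dot p U i (x j)" and ?c = "row_dot p Ws i (x j)"
      have "\<bar>e j i\<bar> \<le> \<bar>ov i\<bar> * (L * \<bar>?a - ?c\<bar>)"
      proof (cases "?a = ?c")
        case True then show ?thesis unfolding e_def dvec2_def dvec1_def by simp
      next
        case False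
        have "e j i = ov i * ((\<sigma> ?a - \<sigma> ?c) / (?a - ?c) - deriv \<sigma> ?c)"
          unfolding e_def dvec2_def dvec1_def using False by (simp add: algebra_simps)
        then show ?thesis using divdiff[OF dif lip False] by (simp add: abs_mult mult_left_mono)
      qed
      also have "\<dots> \<le> omax * (L * (5 * lam * r i))"
        using omax[OF i] Dj[OF i j] L0' omax0 by (intro mult_mono mult_left_mono) auto
      finally show "\<bar>e j i\<bar> \<le> P' * r i" unfolding P'_def by (simp add: mult_ac)
    qed (simp add: P'_def omax0 L0' lam0)
    then show ?thesis unfolding P_eq by (simp add: mult.commute)
  qed
  define dl where "dl j i = dvec1 \<sigma> ov p U (x j) i - dvec1 \<sigma> ov p Ws (x j) i" for j i
  have dlb: "(\<Sum>i<h. (dl j i)\<^sup>2) \<le> (R * P)\<^sup>2" if j: "j < n" for j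
  proof -
    have "(\<Sum>i<h. (dl j i)\<^sup>2) \<le> (P' * R)\<^sup>2"
    proof (rule sum_sq_bound[OF _ _ rR])
      fix i assume i: "i < h"
      let ?a = "row_dot p U i (x j)" and ?c = "row_dot p Ws i (x j)"
      have "\<bar>dl j i\<bar> \<le> \<bar>ov i\<bar> * (L * \<bar>?a - ?c\<bar>)"
        unfolding dl_def dvec1_def using lip[rule_format, of ?a ?c]
        by (simp add: right_diff_distrib[symmetric] abs_mult mult_left_mono)
      also have "\<dots> \<le> omax * (L * (5 * lam * r i))"
        using omax[OF i] Dj[OF i j] L0' omax0 by (intro mult_mono mult_left_mono) auto
      finally show "\<bar>dl j i\<bar> \<le> P' * r i" unfolding P'_def by (simp add: mult_ac)
    qed (simp add: P'_def omax0 L0' lam0)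
    then show ?thesis unfolding P_eq by (simp add: mult.commute)
  qed
  have RPB: "R * P \<le> B"
  proof -
    have "R \<le> sqrt (real h) * s" using R(2) frob_le[of h p Ws] unfolding s_def smax_def by linarith
    then have "R * P \<le> (sqrt (real h) * s) * P" using P0 by (rule mult_right_mono)
    also have "\<dots> = sqrt (real h) * (omax * L * (5 * s * lam))" unfolding P_eq P'_def by (simp add: mult_ac)
    also have "\<dots> \<le> sqrt (real h) * b" unfolding b_def using omax0 L00
      by (intro mult_left_mono) (auto simp: algebra_simps)
    finally show ?thesis unfolding B_eq .
  qed
  define d2 where "d2 j i = dvec2 \<sigma> ov p U Ws (x j) i" for j i
  have d2b: "(\<Sum>i<h. (d2 j i)\<^sup>2) \<le> (2 * B)\<^sup>2" if j: "j < n" for j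
  proof -
    have "(\<Sum>i<h. (d1 j i + e j i)\<^sup>2) \<le> (B + R * P)\<^sup>2"
      using d1b[OF j] eb[OF j] B0 R(1) P0 by (intro L2_tri_sq) auto
    also have "\<dots> \<le> (2 * B)\<^sup>2" using RPB R(1) P0 B0 by (intro power_mono) auto
    finally show ?thesis unfolding d1_def e_def d2_def by simp
  qed
  have core1: "\<And>v. (\<Sum>j<n. (\<Sum>a<h*p. kron p (d1 j) (x j) a * v a)\<^sup>2) \<le> C * B\<^sup>2 * (\<Sum>a<h*p. (v a)\<^sup>2)"
    by (rule core[OF p E3[folded C_def] C0 d1b])
  show "loewner_le_scalar (h * p) (H1 \<sigma> ov p n Ws x) (6 * q * B\<^sup>2)"
    unfolding loewner_le_scalar_def
  proof
    fix v
    have "(\<Sum>a<h*p. \<Sum>b<h*p. v a * H1 \<sigma> ov p n Ws x a b * v b)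
        = (1 / real n) * (\<Sum>j<n. (\<Sum>a<h*p. kron p (d1 j) (x j) a * v a)\<^sup>2)"
      unfolding H1_def rho1_def d1_def by (rule quadform)
    also have "\<dots> \<le> (1 / real n) * (C * B\<^sup>2 * (\<Sum>a<h*p. (v a)\<^sup>2))"
      using core1[of v] n by (intro mult_left_mono) auto
    also have "\<dots> = 6 * q * B\<^sup>2 * (\<Sum>a<h*p. (v a)\<^sup>2)" unfolding C_def using n by simp
    finally show "(\<Sum>a<h*p. \<Sum>b<h*p. v a * H1 \<sigma> ov p n Ws x a b * v b) \<le> 6 * q * B\<^sup>2 * (\<Sum>a<h*p. (v a)\<^sup>2)" .
  qed
  show "\<forall>v. Fq (h * p) (h * p) (H2 \<sigma> ov p n Ws U x) v \<le> (6 * R * q * B * P)\<^sup>2 * (\<Sum>a<h*p. (v a)\<^sup>2)"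
  proof
    fix v
    have "Fq (h * p) (h * p) (H2 \<sigma> ov p n Ws U x) v
       = (\<Sum>a<h*p. (\<Sum>b<h*p. ((1 / real n) * (\<Sum>j<n. kron p (d1 j) (x j) a * kron p (e j) (x j) b)) * v b)\<^sup>2)"
      unfolding Fq_def H2_def rho1_def rho2_def d1_def e_def kron_diff ..
    also have "\<dots> \<le> (1 / real n)\<^sup>2 * (C * B\<^sup>2) * (C * (R * P)\<^sup>2) * (\<Sum>a<h*p. (v a)\<^sup>2)"
      by (rule bilin[OF n]) (use C0 core[OF p E3[folded C_def] C0 d1b] core[OF p E3[folded C_def] C0 eb] in auto)
    also have "\<dots> = (6 * R * q * B * P)\<^sup>2 * (\<Sum>a<h*p. (v a)\<^sup>2)"
      unfolding C_def using n by (simp add: field_simps power2_eq_square)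
    finally show "Fq (h * p) (h * p) (H2 \<sigma> ov p n Ws U x) v \<le> (6 * R * q * B * P)\<^sup>2 * (\<Sum>a<h*p. (v a)\<^sup>2)" .
  qed
  show "\<forall>v. Fq (h * p) (h * p) (H3 \<sigma> ov p n Ws U x) v \<le> (12 * R * q * B * P)\<^sup>2 * (\<Sum>a<h*p. (v a)\<^sup>2)"
  proof
    fix v
    have "Fq (h * p) (h * p) (H3 \<sigma> ov p n Ws U x) v
       = (\<Sum>a<h*p. (\<Sum>b<h*p. ((1 / real n) * (\<Sum>j<n. kron p (dl j) (x j) a * kron p (d2 j) (x j) b)) * v b)\<^sup>2)"
      unfolding Fq_def H3_def rho1_def rho2_def dl_def d2_def kron_diff ..
    also have "\<dots> \<le> (1 / real n)\<^sup>2 * (C * (R * P)\<^sup>2) * (C * (2 * B)\<^sup>2) * (\<Sum>a<h*p. (v a)\<^sup>2)"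
      by (rule bilin[OF n]) (use C0 core[OF p E3[folded C_def] C0 dlb] core[OF p E3[folded C_def] C0 d2b] in auto)
    also have "\<dots> = (12 * R * q * B * P)\<^sup>2 * (\<Sum>a<h*p. (v a)\<^sup>2)"
      unfolding C_def using n by (simp add: field_simps power2_eq_square)
    finally show "Fq (h * p) (h * p) (H3 \<sigma> ov p n Ws U x) v \<le> (12 * R * q * B * P)\<^sup>2 * (\<Sum>a<h*p. (v a)\<^sup>2)" .
  qed
qed


definition dv :: "nat \<times> int list \<Rightarrow> nat \<Rightarrow> real" where
  "dv kz a = (if a < length (snd kz) then real_of_int (snd kz ! a) / real (Suc (fst kz)) else 0)"

lemma floor_approx: "(\<lambda>k. real_of_int \<lfloor>t * real (Suc k)\<rfloor> / real (Suc k)) \<longlonglongrightarrow> t"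
proof (rule tendsto_sandwich[of "\<lambda>k. t - inverse (real (Suc k))" _ _ "\<lambda>_. t"])
  show "\<forall>\<^sub>F k in sequentially. t - inverse (real (Suc k)) \<le> real_of_int \<lfloor>t * real (Suc k)\<rfloor> / real (Suc k)"
  proof (rule always_eventually, rule allI)
    fix k
    have "t * real (Suc k) - 1 \<le> real_of_int \<lfloor>t * real (Suc k)\<rfloor>" by linarith
    then have "(t * real (Suc k) - 1) / real (Suc k) \<le> real_of_int \<lfloor>t * real (Suc k)\<rfloor> / real (Suc k)"
      by (intro divide_right_mono) auto
    then show "t - inverse (real (Suc k)) \<le> real_of_int \<lfloor>t * real (Suc k)\<rfloor> / real (Suc k)"
      by (simp add: field_simps del: of_nat_Suc)
  qed
  show "\<forall>\<^sub>F k in sequentially. real_of_int \<lfloor>t * real (Suc k)\<rfloor> / real (Suc k) \<le> t"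
  proof (rule always_eventually, rule allI)
    fix k
    have "real_of_int \<lfloor>t * real (Suc k)\<rfloor> \<le> t * real (Suc k)" by linarith
    then show "real_of_int \<lfloor>t * real (Suc k)\<rfloor> / real (Suc k) \<le> t"
      by (simp add: divide_le_eq del: of_nat_Suc)
  qed
  have "(\<lambda>k. inverse (real (Suc k))) \<longlonglongrightarrow> 0" by (rule LIMSEQ_inverse_real_of_nat)
  then show "(\<lambda>k. t - inverse (real (Suc k))) \<longlonglongrightarrow> t" using tendsto_diff[OF tendsto_const] by fastforce
qed simp

lemma forall_countable:
  fixes Q :: "(nat \<Rightarrow> real) \<Rightarrow> real"
  assumes cont: "\<And>v u. (\<And>a. a < N \<Longrightarrow> (\<lambda>k. u k a) \<longlonglongrightarrow> v a) \<Longrightarrow> (\<lambda>k. Q (u k)) \<longlonglongrightarrow> Q v"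
  shows "(\<forall>v. Q v \<le> 0) \<longleftrightarrow> (\<forall>kz. Q (dv kz) \<le> 0)"
proof
  assume H: "\<forall>kz. Q (dv kz) \<le> 0"
  show "\<forall>v. Q v \<le> 0"
  proof
    fix v
    define u where "u k = dv (k, map (\<lambda>a. \<lfloor>v a * real (Suc k)\<rfloor>) [0..<N])" for k
    have "(\<lambda>k. Q (u k)) \<longlonglongrightarrow> Q v"
    proof (rule cont)
      fix a assume a: "a < N"
      have "u k a = real_of_int \<lfloor>v a * real (Suc k)\<rfloor> / real (Suc k)" for k
        unfolding u_def dv_def using a by simp
      then show "(\<lambda>k. u k a) \<longlonglongrightarrow> v a" using floor_approx[of "v a"] by simp
    qed
    moreover have "\<forall>k. Q (u k) \<le> 0" using H unfolding u_def by auto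
    ultimately show "Q v \<le> 0" using LIMSEQ_le_const2[of "\<lambda>k. Q (u k)" "Q v" 0] by blast
  qed
qed auto

lemma sets_forall:
  fixes Q :: "'a \<Rightarrow> (nat \<Rightarrow> real) \<Rightarrow> real"
  assumes meas: "\<And>v. (\<lambda>x. Q x v) \<in> borel_measurable M"
    and cont: "\<And>x v u. (\<And>a. a < N \<Longrightarrow> (\<lambda>k. u k a) \<longlonglongrightarrow> v a) \<Longrightarrow> (\<lambda>k. Q x (u k)) \<longlonglongrightarrow> Q x v"
  shows "{x\<in>space M. \<forall>v. Q x v \<le> 0} \<in> sets M"
proof -
  have "{x\<in>space M. \<forall>v. Q x v \<le> 0} = {x\<in>space M. \<forall>kz. Q x (dv kz) \<le> 0}"
    using forall_countable[of N "Q x" for x] cont by blast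
  also have "\<dots> \<in> sets M"
  proof -
    note meas[measurable]
    show ?thesis by measurable
  qed
  finally show ?thesis .
qed


definition Qloe :: "nat \<Rightarrow> (nat \<Rightarrow> nat \<Rightarrow> real) \<Rightarrow> real \<Rightarrow> (nat \<Rightarrow> real) \<Rightarrow> real" where
  "Qloe N H c v = (\<Sum>a<N. \<Sum>b<N. v a * H a b * v b) - c * (\<Sum>a<N. (v a)\<^sup>2)"

definition Qspec :: "nat \<Rightarrow> (nat \<Rightarrow> nat \<Rightarrow> real) \<Rightarrow> real \<Rightarrow> (nat \<Rightarrow> real) \<Rightarrow> real" where
  "Qspec N H c v = Fq N N H v - c\<^sup>2 * (\<Sum>a<N. (v a)\<^sup>2)"

lemma loe_iff: "loewner_le_scalar N H c \<longleftrightarrow> (\<forall>v. Qloe N H c v \<le> 0)"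
  unfolding loewner_le_scalar_def Qloe_def by simp

lemma spec_iff: "0 \<le> c \<Longrightarrow> spec_norm N N H \<le> c \<longleftrightarrow> (\<forall>v. Qspec N H c v \<le> 0)"
  unfolding Qspec_def by (simp add: spec_le_iff)

lemma Qloe_cont: "(\<And>a. a < N \<Longrightarrow> (\<lambda>k. u k a) \<longlonglongrightarrow> v a) \<Longrightarrow> (\<lambda>k. Qloe N H c (u k)) \<longlonglongrightarrow> Qloe N H c v"
  unfolding Qloe_def by (intro tendsto_intros) auto

lemma Qspec_cont: "(\<And>a. a < N \<Longrightarrow> (\<lambda>k. u k a) \<longlonglongrightarrow> v a) \<Longrightarrow> (\<lambda>k. Qspec N H c (u k)) \<longlonglongrightarrow> Qspec N H c v"
  unfolding Qspec_def Fq_def by (intro tendsto_intros) auto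

lemma meas_sigma:
  fixes \<sigma> :: "real \<Rightarrow> real"
  assumes "\<sigma> differentiable_on UNIV"
  shows "\<sigma> \<in> borel_measurable borel"
  by (rule borel_measurable_continuous_onI) (rule differentiable_imp_continuous_on[OF assms])

lemma meas_deriv:
  fixes \<sigma> :: "real \<Rightarrow> real"
  assumes lip: "\<forall>x y. \<bar>deriv \<sigma> x - deriv \<sigma> y\<bar> \<le> L * \<bar>x - y\<bar>"
  shows "deriv \<sigma> \<in> borel_measurable borel"
proof (rule borel_measurable_continuous_onI, rule lipschitz_on_continuous_on)
  have "0 \<le> L" using lip[rule_format, of 1 0] abs_ge_zero[of "deriv \<sigma> 1 - deriv \<sigma> 0"] by simp
  then show "lipschitz_on L UNIV (deriv \<sigma>)" unfolding lipschitz_on_def dist_real_def using lip by auto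
qed

lemma meas_H:
  fixes \<sigma> :: "real \<Rightarrow> real"
  assumes ms[measurable]: "\<sigma> \<in> borel_measurable borel" and md[measurable]: "deriv \<sigma> \<in> borel_measurable borel"
  shows "(\<lambda>x. H1 \<sigma> ov p n Ws x a b) \<in> borel_measurable (gauss_sample n p)"
    and "(\<lambda>x. H2 \<sigma> ov p n Ws U x a b) \<in> borel_measurable (gauss_sample n p)"
    and "(\<lambda>x. H3 \<sigma> ov p n Ws U x a b) \<in> borel_measurable (gauss_sample n p)"
  unfolding H1_def H2_def H3_def rho1_def rho2_def kron_def dvec1_def dvec2_def row_dot_def
  by measurable


lemma tail_row:
  assumes j: "j < n" and p: "2 \<le> p"
  shows "emeasure (gauss_sample n p) {x\<in>space (gauss_sample n p). 5 * sqrt (\<Sum>l<p. (w l)\<^sup>2) * sqrt (ln (real p)) < \<bar>\<Sum>l<p. w l * x j l\<bar>}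
         \<le> ennreal (2 * real p powr (-25/2))"
proof (cases "(\<Sum>l<p. (w l)\<^sup>2) = 0")
  case True
  then have "\<And>l. l < p \<Longrightarrow> w l = 0" by (simp add: sum_nonneg_eq_0_iff)
  then have "{x\<in>space (gauss_sample n p). 5 * sqrt (\<Sum>l<p. (w l)\<^sup>2) * sqrt (ln (real p)) < \<bar>\<Sum>l<p. w l * x j l\<bar>} = {}"
    using True by auto
  then show ?thesis by (simp only: emeasure_empty) simp
next
  case False
  then have W: "0 < (\<Sum>l<p. (w l)\<^sup>2)" by (simp add: sum_nonneg order_less_le)
  have lp: "0 \<le> ln (real p)" using p by simp
  let ?t = "5 * sqrt (\<Sum>l<p. (w l)\<^sup>2) * sqrt (ln (real p))"
  have t0: "0 \<le> ?t" using lp W by simp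
  have "emeasure (gauss_sample n p) {x\<in>space (gauss_sample n p). ?t < \<bar>\<Sum>l<p. w l * x j l\<bar>}
      \<le> ennreal (2 * exp (- ?t\<^sup>2 / (2 * (\<Sum>l<p. (w l)\<^sup>2))))" by (rule tail_abs[OF j W t0])
  also have "- ?t\<^sup>2 / (2 * (\<Sum>l<p. (w l)\<^sup>2)) = (-25/2) * ln (real p)"
    using W lp by (simp add: power_mult_distrib field_simps)
  also have "exp ((-25/2) * ln (real p)) = real p powr (-25/2)"
    using p by (simp add: powr_def)
  finally show ?thesis .
qed

lemma emeasure_UN_bound:
  assumes "finite I" "\<And>i. i \<in> I \<Longrightarrow> A i \<in> sets M" "\<And>i. i \<in> I \<Longrightarrow> emeasure M (A i) \<le> ennreal c" "0 \<le> c"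
  shows "emeasure M (\<Union>i\<in>I. A i) \<le> ennreal (real (card I) * c)"
proof -
  have "emeasure M (\<Union>i\<in>I. A i) \<le> (\<Sum>i\<in>I. emeasure M (A i))"
    using assms by (intro emeasure_subadditive_finite) auto
  also have "\<dots> \<le> (\<Sum>i\<in>I. ennreal c)" using assms(3) by (rule sum_mono)
  also have "\<dots> = ennreal (real (card I) * c)" using assms(4) by (simp add: ennreal_mult ennreal_of_nat_eq_real_of_nat)
  finally show ?thesis .
qed


lemma G_meas:
  fixes \<sigma> :: "real \<Rightarrow> real"
  assumes dif: "\<sigma> differentiable_on UNIV"
    and lip: "\<forall>x y. \<bar>deriv \<sigma> x - deriv \<sigma> y\<bar> \<le> L * \<bar>x - y\<bar>"
    and c2: "0 \<le> c2" and c3: "0 \<le> c3"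
  shows "{x \<in> space (gauss_sample n p).
             loewner_le_scalar (h * p) (H1 \<sigma> ov p n Ws x) c1
           \<and> spec_norm (h * p) (h * p) (H2 \<sigma> ov p n Ws U x) \<le> c2
           \<and> spec_norm (h * p) (h * p) (H3 \<sigma> ov p n Ws U x) \<le> c3} \<in> sets (gauss_sample n p)"
proof -
  let ?M = "gauss_sample n p"
  note mH[measurable] = meas_H[OF meas_sigma[OF dif] meas_deriv[OF lip]]
  have eq: "{x \<in> space ?M.
             loewner_le_scalar (h * p) (H1 \<sigma> ov p n Ws x) c1
           \<and> spec_norm (h * p) (h * p) (H2 \<sigma> ov p n Ws U x) \<le> c2
           \<and> spec_norm (h * p) (h * p) (H3 \<sigma> ov p n Ws U x) \<le> c3}
     = {x \<in> space ?M. \<forall>v. Qloe (h*p) (H1 \<sigma> ov p n Ws x) c1 v \<le> 0}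
       \<inter> {x \<in> space ?M. \<forall>v. Qspec (h*p) (H2 \<sigma> ov p n Ws U x) c2 v \<le> 0}
       \<inter> {x \<in> space ?M. \<forall>v. Qspec (h*p) (H3 \<sigma> ov p n Ws U x) c3 v \<le> 0}"
    unfolding loe_iff spec_iff[OF c2] spec_iff[OF c3] by auto
  have s1: "{x \<in> space ?M. \<forall>v. Qloe (h*p) (H1 \<sigma> ov p n Ws x) c1 v \<le> 0} \<in> sets ?M"
    by (rule sets_forall[where N = "h*p"]) (unfold Qloe_def, measurable, rule Qloe_cont[unfolded Qloe_def])
  have s2: "{x \<in> space ?M. \<forall>v. Qspec (h*p) (H2 \<sigma> ov p n Ws U x) c2 v \<le> 0} \<in> sets ?M"
    by (rule sets_forall[where N = "h*p"]) (unfold Qspec_def Fq_def, measurable, rule Qspec_cont[unfolded Qspec_def Fq_def])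
  have s3: "{x \<in> space ?M. \<forall>v. Qspec (h*p) (H3 \<sigma> ov p n Ws U x) c3 v \<le> 0} \<in> sets ?M"
    by (rule sets_forall[where N = "h*p"]) (unfold Qspec_def Fq_def, measurable, rule Qspec_cont[unfolded Qspec_def Fq_def])
  show ?thesis unfolding eq using s1 s2 s3 by auto
qed


definition Sbad :: "nat \<Rightarrow> nat \<Rightarrow> (nat \<Rightarrow> real) \<Rightarrow> nat \<Rightarrow> (nat \<Rightarrow> nat \<Rightarrow> real) set" where
  "Sbad n p w j = {x\<in>space (gauss_sample n p). 5 * sqrt (\<Sum>l<p. (w l)\<^sup>2) * sqrt (ln (real p)) < \<bar>\<Sum>l<p. w l * x j l\<bar>}"

lemma Sbad_sets[measurable]: "Sbad n p w j \<in> sets (gauss_sample n p)"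
  unfolding Sbad_def by measurable

lemma UN_Sbad:
  assumes p: "2 \<le> p"
  shows "emeasure (gauss_sample n p) (\<Union>ij\<in>{..<h}\<times>{..<n}. Sbad n p (W (fst ij)) (snd ij))
     \<le> ennreal (real h * real n * (2 * real p powr (-25/2)))"
proof -
  have "emeasure (gauss_sample n p) (\<Union>ij\<in>{..<h}\<times>{..<n}. Sbad n p (W (fst ij)) (snd ij))
     \<le> ennreal (real (card ({..<h}\<times>{..<n})) * (2 * real p powr (-25/2)))"
    apply (rule emeasure_UN_bound)
       apply simp
      apply simp
    subgoal for ij using tail_row[OF _ p, where j = "snd ij" and n = n and w = "W (fst ij)"] by (auto simp: Sbad_def)
    apply simp
    done
  then show ?thesis by (simp add: card_cartesian_product mult.assoc)
qed

lemma bad_bound: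
  fixes q :: real and h :: nat and U Ws :: "nat \<Rightarrow> nat \<Rightarrow> real"
  assumes p3: "3 \<le> p" and n1: "1 \<le> n" and q1: "1 \<le> q" and qn: "8 * real p * ln (real p) \<le> q * real n"
  defines "Bd \<equiv> (\<Union>ij\<in>{..<h}\<times>{..<n}. Sbad n p (Ws (fst ij)) (snd ij))
       \<union> (\<Union>ij\<in>{..<h}\<times>{..<n}. Sbad n p (\<lambda>l. U (fst ij) l - Ws (fst ij) l) (snd ij))
       \<union> {x\<in>space (gauss_sample n p). \<exists>w\<in>Net p. (361/400) * (6 * q * real n) < (\<Sum>j<n. (\<Sum>l<p. w l * x j l)\<^sup>2)}"
  shows "Bd \<in> sets (gauss_sample n p)"
    and "measure (gauss_sample n p) Bd \<le> 4 * real h * real n * real p powr (-25/2) + exp (- q * real n / (4 * real p))"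
proof -
  let ?M = "gauss_sample n p"
  interpret M: prob_space ?M by (rule prob_gauss_sample)
  let ?B1 = "\<Union>ij\<in>{..<h}\<times>{..<n}. Sbad n p (Ws (fst ij)) (snd ij)"
  let ?B2 = "\<Union>ij\<in>{..<h}\<times>{..<n}. Sbad n p (\<lambda>l. U (fst ij) l - Ws (fst ij) l) (snd ij)"
  let ?B3 = "{x\<in>space ?M. \<exists>w\<in>Net p. (361/400) * (6 * q * real n) < (\<Sum>j<n. (\<Sum>l<p. w l * x j l)\<^sup>2)}"
  have s1: "?B1 \<in> sets ?M" by (intro sets.finite_UN) auto
  have s2: "?B2 \<in> sets ?M" by (intro sets.finite_UN) auto
  have s3: "?B3 \<in> sets ?M"
  proof -
    have "?B3 = (\<Union>w\<in>Net p. {x\<in>space ?M. (361/400) * (6 * q * real n) < (\<Sum>j<n. (\<Sum>l<p. w l * x j l)\<^sup>2)})" by auto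
    also have "\<dots> \<in> sets ?M" by (intro sets.finite_UN finite_Net) measurable
    finally show ?thesis .
  qed
  show "Bd \<in> sets ?M" unfolding Bd_def using s1 s2 s3 by auto
  have e1: "emeasure ?M ?B1 \<le> ennreal (real h * real n * (2 * real p powr (-25/2)))"
    using p3 by (intro UN_Sbad) auto
  have e2: "emeasure ?M ?B2 \<le> ennreal (real h * real n * (2 * real p powr (-25/2)))"
    using p3 UN_Sbad[where p = p and n = n and h = h and W = "\<lambda>i l. U i l - Ws i l"] by simp
  have e3: "emeasure ?M ?B3 \<le> ennreal (exp (- q * real n / (4 * real p)))"
  proof -
    have "emeasure ?M ?B3 \<le> ennreal (real (card (Net p)) * (sqrt 2 ^ n * exp (- (100/441) * ((361/400) * (6 * q * real n)))))"
      by (rule prob_bad3)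
    also have "\<dots> \<le> ennreal (real (40 * p + 1) ^ p * (sqrt 2 ^ n * exp (- (361/294) * (q * real n))))"
    proof -
      have exq: "- (100/441) * ((361/400) * (6 * q * real n)) = - (361/294) * (q * real n)" by simp
      have cardle: "real (card (Net p)) \<le> real (40 * p + 1) ^ p"
        using card_Net[of p] by (metis of_nat_le_iff of_nat_power)
      show ?thesis unfolding exq by (intro ennreal_leI mult_right_mono cardle) auto
    qed
    also have "\<dots> \<le> ennreal (exp (- q * real n / (4 * real p)))"
      by (rule ennreal_leI, rule numeric3[OF p3 n1 q1 qn])
    finally show ?thesis .
  qed
  have "emeasure ?M Bd \<le> emeasure ?M ?B1 + emeasure ?M ?B2 + emeasure ?M ?B3"
  proof -
    have "emeasure ?M Bd \<le> emeasure ?M (?B1 \<union> ?B2) + emeasure ?M ?B3"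
      unfolding Bd_def using s1 s2 s3 by (intro emeasure_subadditive) auto
    also have "emeasure ?M (?B1 \<union> ?B2) \<le> emeasure ?M ?B1 + emeasure ?M ?B2"
      using s1 s2 by (intro emeasure_subadditive) auto
    finally show ?thesis by (simp add: add_right_mono)
  qed
  also have "\<dots> \<le> ennreal (real h * real n * (2 * real p powr (-25/2))) + ennreal (real h * real n * (2 * real p powr (-25/2))) + ennreal (exp (- q * real n / (4 * real p)))"
    by (intro add_mono e1 e2 e3)
  also have "\<dots> = ennreal (4 * real h * real n * real p powr (-25/2) + exp (- q * real n / (4 * real p)))"
    by (simp add: ennreal_plus[symmetric] del: ennreal_plus)
  finally have "emeasure ?M Bd \<le> ennreal (4 * real h * real n * real p powr (-25/2) + exp (- q * real n / (4 * real p)))" .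
  then have "ennreal (measure ?M Bd) \<le> ennreal (4 * real h * real n * real p powr (-25/2) + exp (- q * real n / (4 * real p)))"
    by (simp only: M.emeasure_eq_measure)
  then show "measure ?M Bd \<le> 4 * real h * real n * real p powr (-25/2) + exp (- q * real n / (4 * real p))"
    by (subst (asm) ennreal_le_iff) (auto intro!: add_nonneg_nonneg)
qed


lemma covgood_from_net:
  assumes p: "0 < p" and C: "0 \<le> C"
    and H: "\<forall>w\<in>Net p. (\<Sum>j<n. (\<Sum>l<p. w l * x j l)\<^sup>2) \<le> (361/400) * C"
  shows "covgood n p x C"
  unfolding covgood_def
proof
  fix V
  define T where "T = sqrt ((361/400) * C)"
  have T0: "0 \<le> T" unfolding T_def using C by simp
  have "\<forall>w\<in>Net p. rho n p x w \<le> T"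
  proof
    fix w assume "w \<in> Net p"
    then have "(\<Sum>j<n. (\<Sum>l<p. w l * x j l)\<^sup>2) \<le> (361/400) * C" using H by auto
    then show "rho n p x w \<le> T" unfolding rho_def L2_set_def T_def by (rule real_sqrt_le_mono)
  qed
  then have rb: "rho n p x V \<le> (20/19) * T * nrm p V" by (rule net_bound[OF p T0])
  have "(rho n p x V)\<^sup>2 \<le> ((20/19) * T * nrm p V)\<^sup>2"
    by (rule power_mono[OF rb]) (simp add: rho_def)
  also have "\<dots> = (400/361) * T\<^sup>2 * (nrm p V)\<^sup>2" by (simp add: power_mult_distrib power_divide)
  also have "\<dots> = C * (\<Sum>l<p. (V l)\<^sup>2)" unfolding T_def nrm_def L2_set_def using C by (simp add: sum_nonneg)
  finally show "(\<Sum>j<n. (\<Sum>l<p. V l * x j l)\<^sup>2) \<le> C * (\<Sum>l<p. (V l)\<^sup>2)"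
    unfolding rho_def L2_set_def by (simp add: sum_nonneg)
qed


theorem mainTheorem10:
  fixes \<sigma> :: "real \<Rightarrow> real" and ov :: "nat \<Rightarrow> real"
    and Ws U :: "nat \<Rightarrow> nat \<Rightarrow> real"
    and h p n :: nat and L L0 R :: real
  assumes "p \<ge> 2" and "h \<le> p" and "n \<ge> 1"
    and "\<sigma> differentiable_on UNIV"
    and "\<forall>x y. \<bar>deriv \<sigma> x - deriv \<sigma> y\<bar> \<le> L * \<bar>x - y\<bar>"
    and "\<bar>deriv \<sigma> 0\<bar> \<le> L0"
    and "0 < R" and "R \<le> frob_norm h p Ws"
    and "frob_norm h p (\<lambda>i l. U i l - Ws i l) \<le> R"
  shows
    "let omax = Max ((\<lambda>i. \<bar>ov i\<bar>) ` {..<h});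
         B = omax * (5 * L * smax h p Ws * sqrt (real h * ln (real p)) + L0 * sqrt (real h));
         P = 5 * omax * L * sqrt (ln (real p));
         q = max 1 (8 * real p * ln (real p) / real n)
     in measure (gauss_sample n p)
          {x \<in> space (gauss_sample n p).
             loewner_le_scalar (h * p) (H1 \<sigma> ov p n Ws x) (6 * q * B\<^sup>2)
           \<and> spec_norm (h * p) (h * p) (H2 \<sigma> ov p n Ws U x) \<le> 6 * R * q * B * P
           \<and> spec_norm (h * p) (h * p) (H3 \<sigma> ov p n Ws U x) \<le> 12 * R * q * B * P}
        \<ge> 1 - 4 * (real n * exp (- real p / 2) + 2 * real n * real p powr (-10)
                    + exp (- q * real n / (4 * real p)))"
proof -
  note assms' = assms
  define omax where "omax = Max ((\<lambda>i. \<bar>ov i\<bar>) ` {..<h})"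
  define B where "B = omax * (5 * L * smax h p Ws * sqrt (real h * ln (real p)) + L0 * sqrt (real h))"
  define P where "P = 5 * omax * L * sqrt (ln (real p))"
  define q where "q = max 1 (8 * real p * ln (real p) / real n)"
  let ?M = "gauss_sample n p"
  define G where "G = {x \<in> space ?M.
             loewner_le_scalar (h * p) (H1 \<sigma> ov p n Ws x) (6 * q * B\<^sup>2)
           \<and> spec_norm (h * p) (h * p) (H2 \<sigma> ov p n Ws U x) \<le> 6 * R * q * B * P
           \<and> spec_norm (h * p) (h * p) (H3 \<sigma> ov p n Ws U x) \<le> 12 * R * q * B * P}"
  define RHS where "RHS = 1 - 4 * (real n * exp (- real p / 2) + 2 * real n * real p powr (-10)
                    + exp (- q * real n / (4 * real p)))"
  have main: "measure ?M G \<ge> RHS"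
  proof -
    interpret M: prob_space ?M by (rule prob_gauss_sample)
    have p2: "2 \<le> p" and hp: "h \<le> p" and n1: "1 \<le> n" using assms by auto
    note dif = assms(4) and lip = assms(5) and d0 = assms(6) and R = assms(7-9)
    have h0: "0 < h"
    proof (rule ccontr)
      assume "\<not> 0 < h"
      then have "h = 0" by simp
      then have "frob_norm h p Ws = 0" by (simp add: frob_norm_def)
      then show False using R by simp
    qed
    have lnp: "0 \<le> ln (real p)" using p2 by simp
    have q1: "1 \<le> q" unfolding q_def by simp
    have L0': "0 \<le> L" using lip[rule_format, of 1 0] abs_ge_zero[of "deriv \<sigma> 1 - deriv \<sigma> 0"] by simp
    have L00: "0 \<le> L0" using d0 by linarith
    have omax0: "0 \<le> omax" unfolding omax_def using h0
      by (meson Max_ge abs_ge_zero finite_imageI finite_lessThan imageI lessThan_iff order_trans)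
    have s0: "0 \<le> smax h p Ws" unfolding smax_def by (rule spec_nonneg)
    have B0: "0 \<le> B" unfolding B_def using omax0 L0' L00 s0 lnp by (intro mult_nonneg_nonneg add_nonneg_nonneg) auto
    have P0: "0 \<le> P" unfolding P_def using omax0 L0' lnp by simp
    have c2: "0 \<le> 6 * R * q * B * P" using R(1) q1 B0 P0 by simp
    have c3: "0 \<le> 12 * R * q * B * P" using R(1) q1 B0 P0 by simp
    have Gs: "G \<in> sets ?M" unfolding G_def by (rule G_meas[OF dif lip c2 c3])
    show ?thesis
    proof (cases "p = 2")
      case True
      have "exp 1 \<le> (4::real)" using exp_le by simp
      then have "1 \<le> 4 * exp (- 1::real)" by (simp add: exp_minus field_simps)
      also have "\<dots> \<le> 4 * (real n * exp (- real p / 2))" using True n1 by simp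
      finally have f: "1 \<le> 4 * (real n * exp (- real p / 2))" .
      have "0 \<le> 2 * real n * real p powr (-10)" "0 \<le> exp (- q * real n / (4 * real p))" by simp_all
      then have "RHS \<le> 0" unfolding RHS_def using f by (simp only: distrib_left)
      then show ?thesis by (meson measure_nonneg order_trans)
    next
      case False
      then have p3: "3 \<le> p" using p2 by simp
      have qn: "8 * real p * ln (real p) \<le> q * real n"
      proof -
        have "8 * real p * ln (real p) / real n \<le> q" unfolding q_def by simp
        then show ?thesis using n1 by (simp add: divide_le_eq)
      qed
      define Bd where "Bd = (\<Union>ij\<in>{..<h}\<times>{..<n}. Sbad n p (Ws (fst ij)) (snd ij))
       \<union> (\<Union>ij\<in>{..<h}\<times>{..<n}. Sbad n p (\<lambda>l. U (fst ij) l - Ws (fst ij) l) (snd ij))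
       \<union> {x\<in>space (gauss_sample n p). \<exists>w\<in>Net p. (361/400) * (6 * q * real n) < (\<Sum>j<n. (\<Sum>l<p. w l * x j l)\<^sup>2)}"
      have Bds: "Bd \<in> sets ?M" and Bdm: "measure ?M Bd \<le> 4 * real h * real n * real p powr (-25/2) + exp (- q * real n / (4 * real p))"
        using bad_bound[OF p3 n1 q1 qn, where h = h and Ws = Ws and U = U] unfolding Bd_def by auto
      have incl: "space ?M - Bd \<subseteq> G"
      proof
        fix x assume x: "x \<in> space ?M - Bd"
        have E1: "\<forall>i<h. \<forall>j<n. \<bar>row_dot p Ws i (x j)\<bar> \<le> 5 * sqrt (\<Sum>l<p. (Ws i l)\<^sup>2) * sqrt (ln (real p))"
        proof (intro allI impI)
          fix i j assume "i < h" "j < n"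
          then have "x \<notin> Sbad n p (Ws i) j" using x unfolding Bd_def by force
          then show "\<bar>row_dot p Ws i (x j)\<bar> \<le> 5 * sqrt (\<Sum>l<p. (Ws i l)\<^sup>2) * sqrt (ln (real p))"
            using x unfolding Sbad_def row_dot_def by auto
        qed
        have E2: "\<forall>i<h. \<forall>j<n. \<bar>\<Sum>l<p. (U i l - Ws i l) * x j l\<bar> \<le> 5 * sqrt (\<Sum>l<p. (U i l - Ws i l)\<^sup>2) * sqrt (ln (real p))"
        proof (intro allI impI)
          fix i j assume "i < h" "j < n"
          then have "x \<notin> Sbad n p (\<lambda>l. U i l - Ws i l) j" using x unfolding Bd_def by force
          then show "\<bar>\<Sum>l<p. (U i l - Ws i l) * x j l\<bar> \<le> 5 * sqrt (\<Sum>l<p. (U i l - Ws i l)\<^sup>2) * sqrt (ln (real p))"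
            using x unfolding Sbad_def by auto
        qed
        have E3: "covgood n p x (6 * q * real n)"
        proof (rule covgood_from_net)
          show "0 < p" using p3 by simp
          show "0 \<le> 6 * q * real n" using q1 by simp
          show "\<forall>w\<in>Net p. (\<Sum>j<n. (\<Sum>l<p. w l * x j l)\<^sup>2) \<le> 361 / 400 * (6 * q * real n)"
            using x unfolding Bd_def by (auto simp: not_less)
        qed
        have pp: "0 < p" using p3 by simp
        have nn: "0 < n" using n1 by simp
        note D = determ[OF pp nn h0 dif lip d0 R q1 lnp E1 E2 E3 omax_def B_def P_def]
        show "x \<in> G" unfolding G_def
          using x D spec_le_iff[OF c2] spec_le_iff[OF c3] by auto
      qed
      have "RHS \<le> 1 - measure ?M Bd"
      proof -
        have a: "real h * real p powr (-25/2) \<le> 2 * real p powr (-10)"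
        proof -
          have "real h * real p powr (-25/2) \<le> real p * real p powr (-25/2)"
            using hp by (intro mult_right_mono) auto
          also have "\<dots> = real p powr (-23/2)"
          proof -
            have "real p powr (-23/2) = real p powr (1 + (-25/2))" by simp
            also have "\<dots> = real p powr 1 * real p powr (-25/2)" by (rule powr_add)
            also have "\<dots> = real p * real p powr (-25/2)" using p3 by simp
            finally show ?thesis by simp
          qed
          also have "\<dots> \<le> real p powr (-10)" using p3 by (intro powr_mono) auto
          also have "\<dots> \<le> 2 * real p powr (-10)" by simp
          finally show ?thesis .
        qed
        have f1: "4 * real h * real n * real p powr (-25/2) \<le> 8 * real n * real p powr (-10)"
          using mult_left_mono[OF a, of "4 * real n"] by (simp add: mult_ac)
        have f2: "0 \<le> real n * exp (- real p / 2)" by simp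
        have f3: "0 \<le> exp (- q * real n / (4 * real p))" by simp
        have f4: "4 * (2 * real n * real p powr (-10)) = 8 * real n * real p powr (-10)" by simp
        show ?thesis using Bdm f1 f2 f3 f4 unfolding RHS_def by (simp only: distrib_left)
      qed
      also have "1 - measure ?M Bd = measure ?M (space ?M - Bd)" using Bds by (simp add: M.prob_compl)
      also have "\<dots> \<le> measure ?M G" using incl Gs by (intro M.finite_measure_mono) auto
      finally show ?thesis .
    qed
  qed
  show ?thesis using main unfolding Let_def G_def RHS_def omax_def B_def P_def q_def .
qed

end
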